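(* Let $d\geq 1$, $S=\mathbb{R}^d$, and let $X=(X_u,u\in\mathbb{T})$ be a bifurcating Markov chain on $S$ with initial distribution $\nu$ and probability kernel $\mathcal{P}$, with induced kernel $\mathcal{Q}=\frac12(P_0+P_1)$. Assume: (A1) (Geometric ergodicity) $\mathcal{Q}$ has a unique invariant probability measure $\mu$, and there exist $\alpha\in(0,1)$ and a finite $M$ such that for all $f\in L^2(\mu)$ and all $n\in\mathbb{N}$, $\|\mathcal{Q}^n f-\langle\mu,f\rangle\|_{L^2(\mu)}\leq M\alpha^n\|f\|_{L^2(\mu)}$. (A2) (Regularity of $\mathcal{P}$ and $\nu$) (i) $\mathcal{P}$ has a density $p$ with respect to $\mu^{\otimes 2}$: $\mathcal{P}(x,dy,dz)=p(x,y,z)\,\mu(dy)\mu(dz)$ for all $x\in S$; (ii) the function $\mathfrak{h}(x)=\left(\int_S q(x,y)^2\,\mu(dy)\right)^{1/2}$ belongs to $L^2(\mu)$, where $q(x,y)=\frac12\int_S (p(x,y,z)+p(x,z,y))\,\mu(dz)$ is the density of $\mathcal{Q}$ with respect to $\mu$; (iii) there exists $k_1\geq 1$ such that $\mathfrak{h}_{k_1}:=\mathcal{Q}^{k_1-1}\mathfrak{h}\in L^6(\mu)$; (iv) there exists $k_0\in\mathbb{N}$ such that $\nu\mathcal{Q}^{k_0}(dy)=\nu_0(y)\mu(dy)$ with $\|\nu_0\|_\infty<+\infty$. (A3) (Density of $\mu$, integrability) $\mu$ has a density with respect to Lebesgue measure, still denoted $\mu$, and the following constants are finite: $C_0=\sup_{x,y\in\mathbb{R}^d}\big(\mu(x)+q(x,y)\mu(y)\big)$,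 $C_1=\sup_{y,z\in\mathbb{R}^d}\int_{\mathbb{R}^d}\mu(x)\mu(y)\mu(z)p(x,y,z)\,dx$, $C_2=\int_{\mathbb{R}^d}\mu(x)\sup_{z\in\mathbb{R}^d}\left(\int_{\mathbb{R}^d}\mu(y)\mathfrak{h}(y)\mu(z)\big(p(x,y,z)+p(x,z,y)\big)\,dy\right)^2dx$. (A4) (Kernel and bandwidths) $K\in\mathcal{B}(\mathbb{R}^d)$ satisfies $\|K\|_\infty<\infty$, $\int|K|<\infty$, $\int K^2<\infty$, $\int_{\mathbb{R}^d}K(x)\,dx=1$ and $\lim_{|x|\to\infty}|x|K(x)=0$; and $h_n=2^{-n\gamma}$ for some $\gamma\in(0,1/d)$. (A5) There exists $s>0$ such that: (i) $\mu$ admits partial derivatives with respect to each $x_j$, $j\in\{1,\dots,d\}$, up to order $\lfloor s\rfloor$, and there is a finite $L>0$ with $\left|\frac{\partial^{\lfloor s\rfloor}\mu}{\partial x_j^{\lfloor s\rfloor}}(x_{-j},t)-\frac{\partial^{\lfloor s\rfloor}\mu}{\partial x_j^{\lfloor s\rfloor}}(x)\right|\leq L|x_j-t|^{s-\lfloor s\rfloor}$ for all $x\in\mathbb{R}^d$, $t\in\mathbb{R}$, $j\in\{1,\dots,d\}$ (where $(x_{-j},t)$ is $x$ with its $j$-th coordinate replaced by $t$, and $\partial^0\mu/\partial x_j^0=\mu$); (ii) $\int_{\mathbb{R}^d}|x|^sK(x)\,dx<\infty$ and $\int_{\mathbb{R}}x_j^kK(x)\,dx_j=0$ for all $k\in\{1,\dots,\lfloor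 s\rfloor\}$ and $j\in\{1,\dots,d\}$; (iii) $\gamma>1/(2s+d)$, i.e. $\lim_{n\to\infty}2^n h_n^{2s+d}=0$. Furthermore, if $\alpha>1/\sqrt2$, assume $2^{d\gamma}>2\alpha^2$. Then for every $x$ at which $\mu$ is continuous and for $\mathbb{A}_n\in\{\mathbb{G}_n,\mathbb{T}_n\}$, $\widehat{\mu}_{\mathbb{A}_n}(x)\to\mu(x)$ in probability as $n\to\infty$, where $\widehat{\mu}_{\mathbb{A}_n}(x)=|\mathbb{A}_n|^{-1}h_n^{-d/2}\sum_{u\in\mathbb{A}_n}K_{h_n}(x-X_u)$ and $K_h(y)=h^{-d/2}K(h^{-1}y)$.
   Context: Binary tree notation: $\mathbb{G}_0=\{\emptyset\}$, $\mathbb{G}_k=\{0,1\}^k$ (generation $k$), $\mathbb{T}_k=\bigcup_{0\le r\le k}\mathbb{G}_r$, $\mathbb{T}=\bigcup_{r}\mathbb{G}_r$; for $i\in\mathbb{T}$, $i0,i1$ are its children (concatenation). A bifurcating Markov chain (BMC) on a measurable space $(S,\mathscr{S})$ with initial distribution $\nu$ and probability kernel $\mathcal{P}$ on $S\times\mathscr{S}^{\otimes 2}$ is a process $X=(X_i,i\in\mathbb{T})$ with $X_\emptyset\sim\nu$ and such that for every family $(g_i)$ of bounded measurable functions on $S^3$ and all $k\ge0$, $\mathbb{E}[\prod_{i\in\mathbb{G}_k}g_i(X_i,X_{i0},X_{i1})\mid \sigma(X_j;j\in\mathbb{T}_k)]=\prod_{i\in\mathbb{G}_k}\mathcal{P}g_i(X_i)$,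 where $\mathcal{P}g(x)=\int g(x,y,z)\mathcal{P}(x,dy,dz)$. Define kernels $P_0(x,A)=\mathcal{P}(x,A\times S)$, $P_1(x,A)=\mathcal{P}(x,S\times A)$, $\mathcal{Q}=\frac12(P_0+P_1)$; $\mathcal{Q}f(x)=\int f(y)\mathcal{Q}(x,dy)$, $\mathcal{Q}^n$ its iterates, and $\nu\mathcal{Q}^k$ the measure $A\mapsto\int\nu(dx)\mathcal{Q}^k(x,A)$. $\langle\mu,f\rangle=\int f\,d\mu$. For $s\ge0$, $\lfloor s\rfloor$ is its integer part. *)

theory Defs
  imports "HOL-Probability.Probability"
begin

text \<open>Vertices of the binary tree are bit lists; the children of u are u@[False] (u0)
  and u@[True] (u1); the root is the empty list.\<close>

definition Gen :: "nat \<Rightarrow> bool list set" where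
  "Gen k = {u. length u = k}"

definition Tree :: "nat \<Rightarrow> bool list set" where
  "Tree k = {u. length u \<le> k}"

definition Pop :: "('x \<Rightarrow> ('x \<times> 'x) measure) \<Rightarrow> ('x \<Rightarrow> 'x \<Rightarrow> 'x \<Rightarrow> real) \<Rightarrow> 'x \<Rightarrow> real" where
  "Pop P g x = (\<integral> yz. g x (fst yz) (snd yz) \<partial>(P x))"

definition P0 :: "('x::topological_space \<Rightarrow> ('x \<times> 'x) measure) \<Rightarrow> 'x \<Rightarrow> 'x measure" where
  "P0 P x = distr (P x) borel fst"

definition P1 :: "('x::topological_space \<Rightarrow> ('x \<times> 'x) measure) \<Rightarrow> 'x \<Rightarrow> 'x measure" where
  "P1 P x = distr (P x) borel snd"

definition Qk :: "('x::topological_space \<Rightarrow> ('x \<times> 'x) measure) \<Rightarrow> 'x \<Rightarrow> 'x measure" where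
  "Qk P x = measure_of UNIV (sets borel) (\<lambda>A. (emeasure (P0 P x) A + emeasure (P1 P x) A) / 2)"

fun Qn :: "('x::topological_space \<Rightarrow> ('x \<times> 'x) measure) \<Rightarrow> nat \<Rightarrow> 'x \<Rightarrow> 'x measure" where
  "Qn P 0 x = return borel x"
| "Qn P (Suc n) x = measure_of UNIV (sets borel) (\<lambda>A. \<integral>\<^sup>+ y. emeasure (Qk P y) A \<partial>(Qn P n x))"

definition Qpow :: "('x::topological_space \<Rightarrow> ('x \<times> 'x) measure) \<Rightarrow> nat \<Rightarrow> ('x \<Rightarrow> real) \<Rightarrow> 'x \<Rightarrow> real" where
  "Qpow P n f x = (\<integral> y. f y \<partial>(Qn P n x))"

definition mQn :: "'x measure \<Rightarrow> ('x::topological_space \<Rightarrow> ('x \<times> 'x) measure) \<Rightarrow> nat \<Rightarrow> 'x measure" where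
  "mQn \<nu> P k = measure_of UNIV (sets borel) (\<lambda>A. \<integral>\<^sup>+ x. emeasure (Qn P k x) A \<partial>\<nu>)"

definition Q_invariant_prob :: "('x::topological_space \<Rightarrow> ('x \<times> 'x) measure) \<Rightarrow> 'x measure \<Rightarrow> bool" where
  "Q_invariant_prob P m \<longleftrightarrow> prob_space m \<and> sets m = sets borel \<and>
     (\<forall>A\<in>sets borel. (\<integral>\<^sup>+ x. emeasure (Qk P x) A \<partial>m) = emeasure m A)"

definition tree_sigma :: "'a measure \<Rightarrow> (bool list \<Rightarrow> 'a \<Rightarrow> 'x::topological_space) \<Rightarrow> nat \<Rightarrow> 'a measure" where
  "tree_sigma M X k = sigma (space M) {X j -` B \<inter> space M | j B. j \<in> Tree k \<and> B \<in> sets borel}"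

definition bmc :: "'a measure \<Rightarrow> (bool list \<Rightarrow> 'a \<Rightarrow> 'x::{second_countable_topology,topological_space})
     \<Rightarrow> 'x measure \<Rightarrow> ('x \<Rightarrow> ('x \<times> 'x) measure) \<Rightarrow> bool" where
  "bmc M X \<nu> P \<longleftrightarrow>
     prob_space M \<and>
     P \<in> borel \<rightarrow>\<^sub>M prob_algebra (borel \<Otimes>\<^sub>M borel) \<and>
     (\<forall>u. X u \<in> M \<rightarrow>\<^sub>M borel) \<and>
     distr M borel (X []) = \<nu> \<and>
     (\<forall>k (g :: bool list \<Rightarrow> 'x \<Rightarrow> 'x \<Rightarrow> 'x \<Rightarrow> real).
        (\<forall>i\<in>Gen k. (\<lambda>(x, y, z). g i x y z) \<in> borel_measurable borel \<and>
                    (\<exists>B. \<forall>x y z. \<bar>g i x y z\<bar> \<le> B)) \<longrightarrow>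
        (AE \<omega> in M.
           real_cond_exp M (tree_sigma M X k)
              (\<lambda>\<omega>. \<Prod>i\<in>Gen k. g i (X i \<omega>) (X (i @ [False]) \<omega>) (X (i @ [True]) \<omega>)) \<omega>
           = (\<Prod>i\<in>Gen k. Pop P (g i) (X i \<omega>))))"

definition upd :: "real ^ 'd \<Rightarrow> 'd \<Rightarrow> real \<Rightarrow> real ^ 'd" where
  "upd x j t = (\<chi> i. if i = j then t else x $ i)"

fun pdiff :: "'d \<Rightarrow> nat \<Rightarrow> (real ^ 'd \<Rightarrow> real) \<Rightarrow> real ^ 'd \<Rightarrow> real" where
  "pdiff j 0 g = g"
| "pdiff j (Suc m) g = (\<lambda>x. deriv (\<lambda>t. pdiff j m g (upd x j t)) (x $ j))"

definition Kh :: "(real ^ 'd \<Rightarrow> real) \<Rightarrow> real \<Rightarrow> real ^ 'd \<Rightarrow> real" where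
  "Kh K h y = h powr (- (real CARD('d) / 2)) * K ((1 / h) *\<^sub>R y)"

definition mu_hat :: "(real ^ 'd \<Rightarrow> real) \<Rightarrow> (nat \<Rightarrow> real) \<Rightarrow> (bool list \<Rightarrow> 'a \<Rightarrow> real ^ 'd)
     \<Rightarrow> bool list set \<Rightarrow> nat \<Rightarrow> real ^ 'd \<Rightarrow> 'a \<Rightarrow> real" where
  "mu_hat K h X A n x \<omega> =
     (1 / real (card A)) * h n powr (- (real CARD('d) / 2)) * (\<Sum>u\<in>A. Kh K (h n) (x - X u \<omega>))"

end

theory Submission
  imports Defs
begin


lemma fst_borel[measurable]: "fst \<in> (borel :: ('a::second_countable_topology \<times> 'b::second_countable_topology) measure) \<rightarrow>\<^sub>M borel"
  by (subst borel_prod[symmetric]) simp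
lemma snd_borel[measurable]: "snd \<in> (borel :: ('a::second_countable_topology \<times> 'b::second_countable_topology) measure) \<rightarrow>\<^sub>M borel"
  by (subst borel_prod[symmetric]) simp
lemma pair_borel[measurable]: "f \<in> M \<rightarrow>\<^sub>M borel \<Longrightarrow> g \<in> M \<rightarrow>\<^sub>M borel \<Longrightarrow> (\<lambda>x. (f x, g x)) \<in> M \<rightarrow>\<^sub>M (borel :: ('a::second_countable_topology \<times> 'b::second_countable_topology) measure)"
  by (subst borel_prod[symmetric]) simp

locale kset =
  fixes P :: "real^'d::finite \<Rightarrow> ((real^'d) \<times> (real^'d)) measure"
    and mu :: "real^'d \<Rightarrow> real"
    and p :: "real^'d \<Rightarrow> real^'d \<Rightarrow> real^'d \<Rightarrow> real"
  assumes P_meas: "P \<in> borel \<rightarrow>\<^sub>M prob_algebra (borel \<Otimes>\<^sub>M borel)"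
    and mu_meas[measurable]: "mu \<in> borel_measurable borel"
    and mu_nonneg: "\<And>x. mu x \<ge> 0"
    and mu_prob: "prob_space (density lborel (\<lambda>x. ennreal (mu x)))"
    and p_meas: "(\<lambda>(x, y, z). p x y z) \<in> borel_measurable borel"
    and p_nonneg: "\<And>x y z. p x y z \<ge> 0"
    and A2_i: "\<And>x. P x = density (density lborel (\<lambda>x. ennreal (mu x)) \<Otimes>\<^sub>M density lborel (\<lambda>x. ennreal (mu x))) (\<lambda>(y, z). ennreal (p x y z))"
begin

abbreviation "\<mu>M \<equiv> density lborel (\<lambda>x. ennreal (mu x))"

definition "q2 x y = (\<integral>\<^sup>+ z. ennreal (p x y z + p x z y) \<partial>\<mu>M)"

lemma sets_muM[simp, measurable_cong]: "sets \<mu>M = sets borel" by simp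
lemma space_muM[simp]: "space \<mu>M = UNIV" by simp

lemma pair_sf: "pair_sigma_finite \<mu>M \<mu>M"
proof -
  interpret prob_space \<mu>M by (rule mu_prob)
  show ?thesis by (simp add: pair_sigma_finite_def sigma_finite_measure_axioms)
qed

lemma sets_pair_muM[simp, measurable_cong]: "sets (\<mu>M \<Otimes>\<^sub>M \<mu>M) = sets (borel :: ((real^'d) \<times> (real^'d)) measure)"
  by (metis borel_prod sets_muM sets_pair_measure_cong)

lemma p_meas2[measurable]: "(\<lambda>yz. p x (fst yz) (snd yz)) \<in> borel_measurable borel"
proof -
  have "(\<lambda>yz. (x, yz)) \<in> (borel::((real^'d) \<times> (real^'d)) measure) \<rightarrow>\<^sub>M (borel :: ((real^'d) \<times> (real^'d) \<times> (real^'d)) measure)"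
    by (intro borel_measurable_continuous_onI continuous_intros)
  from measurable_comp[OF this p_meas] show ?thesis by (simp add: o_def case_prod_beta)
qed

lemma p_meas3[measurable]: "(\<lambda>yz. p (fst yz) (fst (snd yz)) (snd (snd yz))) \<in> borel_measurable borel"
proof -
  have "(\<lambda>(x, y, z). p x y z) = (\<lambda>yz. p (fst yz) (fst (snd yz)) (snd (snd yz)))"
    by (auto simp: fun_eq_iff split: prod.splits)
  with p_meas show ?thesis by simp
qed

lemma P_space[simp]: "space (P x) = UNIV" by (simp add: A2_i space_pair_measure)
lemma P_sets[simp]: "sets (P x) = sets (borel :: ((real^'d) \<times> (real^'d)) measure)"
  unfolding A2_i sets_density sets_pair_muM ..

lemma sf_muM: "sigma_finite_measure \<mu>M"
proof -
  interpret prob_space \<mu>M by (rule mu_prob)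
  show ?thesis by unfold_locales
qed

lemma P_prob: "prob_space (P x)"
  using measurable_space[OF P_meas, of x] by (simp add: space_prob_algebra)

lemma nn_P: assumes [measurable]: "f \<in> borel_measurable borel"
  shows "(\<integral>\<^sup>+yz. f yz \<partial>P x) = (\<integral>\<^sup>+y. \<integral>\<^sup>+z. ennreal (p x y z) * f (y, z) \<partial>\<mu>M \<partial>\<mu>M)"
proof -
  have m: "(\<lambda>yz. ennreal (p x (fst yz) (snd yz)) * f yz) \<in> borel_measurable (\<mu>M \<Otimes>\<^sub>M \<mu>M)"
    by (simp add: measurable_cong_sets[OF sets_pair_muM refl])
  have "(\<integral>\<^sup>+yz. f yz \<partial>P x) = (\<integral>\<^sup>+yz. ennreal (p x (fst yz) (snd yz)) * f yz \<partial>(\<mu>M \<Otimes>\<^sub>M \<mu>M))"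
    unfolding A2_i
    by (subst nn_integral_density) (auto simp: measurable_cong_sets[OF sets_pair_muM refl] case_prod_beta)
  also have "\<dots> = (\<integral>\<^sup>+y. \<integral>\<^sup>+z. ennreal (p x y z) * f (y, z) \<partial>\<mu>M \<partial>\<mu>M)"
    using sigma_finite_measure.nn_integral_fst[OF sf_muM m] by simp
  finally show ?thesis .
qed

lemma p_y[measurable]: "p x y \<in> borel_measurable borel"
proof -
  have "(\<lambda>z. (y, z)) \<in> borel \<rightarrow>\<^sub>M (borel :: ((real^'d) \<times> (real^'d)) measure)" by simp
  from measurable_comp[OF this p_meas2[of x]] show ?thesis by (simp add: o_def)
qed
lemma p_y'[measurable]: "(\<lambda>z. p x z y) \<in> borel_measurable borel"
proof -
  have "(\<lambda>z. (z, y)) \<in> borel \<rightarrow>\<^sub>M (borel :: ((real^'d) \<times> (real^'d)) measure)" by simp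
  from measurable_comp[OF this p_meas2[of x]] show ?thesis by (simp add: o_def)
qed

lemma pm_pair[measurable]: "(\<lambda>(y, z). ennreal (p x y z)) \<in> borel_measurable (\<mu>M \<Otimes>\<^sub>M \<mu>M)"
  by (simp add: measurable_cong_sets[OF sets_pair_muM refl] case_prod_beta)

lemma pm_pair'[measurable]: "(\<lambda>(y, z). ennreal (p x z y)) \<in> borel_measurable (\<mu>M \<Otimes>\<^sub>M \<mu>M)"
proof -
  have "(\<lambda>(y, z). ennreal (p x y z)) \<in> borel_measurable (\<mu>M \<Otimes>\<^sub>M \<mu>M)" by simp
  from measurable_pair_swap[OF this] show ?thesis by (simp add: case_prod_beta)
qed

lemma A_meas[measurable]: "(\<lambda>y. \<integral>\<^sup>+ z. ennreal (p x y z) \<partial>\<mu>M) \<in> borel_measurable \<mu>M"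
  by (rule sigma_finite_measure.borel_measurable_nn_integral[OF sf_muM]) simp

lemma B_meas[measurable]: "(\<lambda>y. \<integral>\<^sup>+ z. ennreal (p x z y) \<partial>\<mu>M) \<in> borel_measurable \<mu>M"
  by (rule sigma_finite_measure.borel_measurable_nn_integral[OF sf_muM]) simp

lemma q2_eq: "q2 x y = (\<integral>\<^sup>+ z. ennreal (p x y z) \<partial>\<mu>M) + (\<integral>\<^sup>+ z. ennreal (p x z y) \<partial>\<mu>M)"
proof -
  have m1: "(\<lambda>z. ennreal (p x y z)) \<in> borel_measurable \<mu>M" using pm_pair[of x]
    by (simp add: measurable_cong_sets[OF sets_muM refl])
  have m2: "(\<lambda>z. ennreal (p x z y)) \<in> borel_measurable \<mu>M" using pm_pair'[of x]
    by (simp add: measurable_cong_sets[OF sets_muM refl])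
  show ?thesis unfolding q2_def
    by (subst nn_integral_add[symmetric]) (auto simp: p_nonneg m1 m2 intro!: nn_integral_cong)
qed

lemma q2_meas[measurable]: "q2 x \<in> borel_measurable \<mu>M"
  unfolding q2_eq[abs_def] by simp

lemma nn_avg:
  assumes [measurable]: "f \<in> borel_measurable borel"
  shows "(\<integral>\<^sup>+yz. f (fst yz) \<partial>P x) + (\<integral>\<^sup>+yz. f (snd yz) \<partial>P x) = (\<integral>\<^sup>+y. q2 x y * f y \<partial>\<mu>M)"
proof -
  have fm: "f \<in> borel_measurable \<mu>M" by (simp add: measurable_cong_sets[OF sets_muM refl])
  have 1: "(\<integral>\<^sup>+yz. f (fst yz) \<partial>P x) = (\<integral>\<^sup>+y. (\<integral>\<^sup>+ z. ennreal (p x y z) \<partial>\<mu>M) * f y \<partial>\<mu>M)"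
    by (subst nn_P) (auto intro!: nn_integral_cong simp: nn_integral_multc fm)
  have "(\<integral>\<^sup>+yz. f (snd yz) \<partial>P x) = (\<integral>\<^sup>+y. \<integral>\<^sup>+z. ennreal (p x y z) * f z \<partial>\<mu>M \<partial>\<mu>M)"
    by (subst nn_P) auto
  also have "\<dots> = (\<integral>\<^sup>+z. \<integral>\<^sup>+y. ennreal (p x y z) * f z \<partial>\<mu>M \<partial>\<mu>M)"
    by (rule pair_sigma_finite.Fubini[OF pair_sf, of "\<lambda>(y,z). ennreal (p x y z) * f z", simplified, symmetric])
  also have "\<dots> = (\<integral>\<^sup>+z. (\<integral>\<^sup>+ y. ennreal (p x y z) \<partial>\<mu>M) * f z \<partial>\<mu>M)"
    by (auto intro!: nn_integral_cong simp: nn_integral_multc)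
  finally have 2: "(\<integral>\<^sup>+yz. f (snd yz) \<partial>P x) = (\<integral>\<^sup>+y. (\<integral>\<^sup>+ z. ennreal (p x z y) \<partial>\<mu>M) * f y \<partial>\<mu>M)" .
  show ?thesis unfolding 1 2
    by (subst nn_integral_add[symmetric]) (auto simp: q2_eq distrib_right fm)
qed

definition "qq x y = q2 x y / 2"

lemma qq_meas[measurable]: "qq x \<in> borel_measurable \<mu>M"
  unfolding qq_def[abs_def] by simp

lemma emeasure_P0: "A \<in> sets borel \<Longrightarrow> emeasure (P0 P x) A = (\<integral>\<^sup>+yz. indicator A (fst yz) \<partial>P x)"
proof -
  assume A[measurable]: "A \<in> sets borel"
  have "(\<integral>\<^sup>+y. indicator A y \<partial>distr (P x) borel fst) = (\<integral>\<^sup>+yz. indicator A (fst yz) \<partial>P x)"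
    by (rule nn_integral_distr) (auto simp: measurable_cong_sets[OF P_sets refl])
  then show ?thesis by (simp add: P0_def)
qed

lemma emeasure_P1: "A \<in> sets borel \<Longrightarrow> emeasure (P1 P x) A = (\<integral>\<^sup>+yz. indicator A (snd yz) \<partial>P x)"
proof -
  assume A[measurable]: "A \<in> sets borel"
  have "(\<integral>\<^sup>+y. indicator A y \<partial>distr (P x) borel snd) = (\<integral>\<^sup>+yz. indicator A (snd yz) \<partial>P x)"
    by (rule nn_integral_distr) (auto simp: measurable_cong_sets[OF P_sets refl])
  then show ?thesis by (simp add: P1_def)
qed

lemma Qk_density: "Qk P x = density \<mu>M (qq x)"
proof -
  have "Qk P x = measure_of UNIV (sets borel) (emeasure (density \<mu>M (qq x)))"
    unfolding Qk_def
  proof (rule measure_of_eq)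
    show "sets borel \<subseteq> Pow UNIV" by simp
    fix A assume "A \<in> sigma_sets UNIV (sets (borel :: (real^'d) measure))"
    then have A[measurable]: "A \<in> sets borel" by (metis sets.sigma_sets_eq space_borel)
    have "(emeasure (P0 P x) A + emeasure (P1 P x) A) / 2 = (\<integral>\<^sup>+y. q2 x y * indicator A y \<partial>\<mu>M) / 2"
      by (simp add: emeasure_P0 emeasure_P1 nn_avg)
    also have "\<dots> = (\<integral>\<^sup>+y. qq x y * indicator A y \<partial>\<mu>M)"
      unfolding qq_def
      by (subst nn_integral_divide[symmetric]) (auto intro!: nn_integral_cong simp: ennreal_times_divide mult.commute)
    also have "\<dots> = emeasure (density \<mu>M (qq x)) A"
      by (subst emeasure_density) (auto simp: mult.commute)
    finally show "(emeasure (P0 P x) A + emeasure (P1 P x) A) / 2 = emeasure (density \<mu>M (qq x)) A" .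
  qed
  also have "\<dots> = density \<mu>M (qq x)"
    using measure_of_of_measure[of "density \<mu>M (qq x)"] by simp
  finally show ?thesis .
qed

lemma Qk_sets[simp, measurable_cong]: "sets (Qk P x) = sets borel"
  by (simp add: Qk_density)
lemma Qk_space[simp]: "space (Qk P x) = UNIV"
  by (simp add: Qk_density)

lemma emeasure_Qk: "A \<in> sets borel \<Longrightarrow> emeasure (Qk P x) A = (emeasure (P x) (A \<times> UNIV) + emeasure (P x) (UNIV \<times> A)) / 2"
proof -
  assume A[measurable]: "A \<in> sets borel"
  have "emeasure (Qk P x) A = (\<integral>\<^sup>+y. qq x y * indicator A y \<partial>\<mu>M)"
    by (simp add: Qk_density emeasure_density mult.commute)
  also have "\<dots> = (\<integral>\<^sup>+y. q2 x y * indicator A y \<partial>\<mu>M) / 2"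
    unfolding qq_def
    by (subst nn_integral_divide[symmetric]) (auto intro!: nn_integral_cong simp: ennreal_times_divide mult.commute)
  also have "\<dots> = ((\<integral>\<^sup>+yz. indicator A (fst yz) \<partial>P x) + (\<integral>\<^sup>+yz. indicator A (snd yz) \<partial>P x)) / 2"
    by (simp add: nn_avg)
  also have "(\<integral>\<^sup>+yz. indicator A (fst yz) \<partial>P x) = emeasure (P x) (A \<times> UNIV)"
  proof -
    have "(\<lambda>yz::(real^'d) \<times> (real^'d). indicator A (fst yz) :: ennreal) = indicator (A \<times> UNIV)"
      by (auto simp: fun_eq_iff indicator_def)
    moreover have "A \<times> UNIV \<in> sets (P x)" by (simp add: borel_prod[symmetric])
    ultimately show ?thesis by simp
  qed
  also have "(\<integral>\<^sup>+yz. indicator A (snd yz) \<partial>P x) = emeasure (P x) (UNIV \<times> A)"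
  proof -
    have "(\<lambda>yz::(real^'d) \<times> (real^'d). indicator A (snd yz) :: ennreal) = indicator (UNIV \<times> A)"
      by (auto simp: fun_eq_iff indicator_def)
    moreover have "UNIV \<times> A \<in> sets (P x)" by (simp add: borel_prod[symmetric])
    ultimately show ?thesis by simp
  qed
  finally show ?thesis .
qed

lemma Qk_prob: "prob_space (Qk P x)"
proof
  interpret prob_space "P x" by (rule P_prob)
  have "emeasure (Qk P x) UNIV = (emeasure (P x) (UNIV \<times> UNIV) + emeasure (P x) (UNIV \<times> UNIV)) / 2"
    by (simp add: emeasure_Qk)
  also have "\<dots> = 1" using emeasure_space_1 by (simp add: space_pair_measure)
  finally show "emeasure (Qk P x) (space (Qk P x)) = 1" by simp
qed

lemma Qk_meas[measurable]: "Qk P \<in> borel \<rightarrow>\<^sub>M subprob_algebra borel"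
proof (rule measurable_subprob_algebra)
  show "subprob_space (Qk P x)" for x
    using Qk_prob[of x] by (simp add: prob_space_imp_subprob_space)
  show "sets (Qk P x) = sets borel" for x by simp
  fix A :: "(real^'d) set" assume A[measurable]: "A \<in> sets borel"
  have PP[measurable]: "P \<in> borel \<rightarrow>\<^sub>M subprob_algebra (borel \<Otimes>\<^sub>M borel)"
    by (rule measurable_prob_algebraD[OF P_meas])
  have "(\<lambda>x. (emeasure (P x) (A \<times> UNIV) + emeasure (P x) (UNIV \<times> A)) / 2) \<in> borel_measurable borel"
    by measurable
  then show "(\<lambda>x. emeasure (Qk P x) A) \<in> borel_measurable borel"
    by (subst measurable_cong[OF emeasure_Qk[OF A]]) auto
qed

end


definition bm :: "('x::topological_space \<Rightarrow> real) \<Rightarrow> real \<Rightarrow> bool" where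
  "bm f B \<longleftrightarrow> f \<in> borel_measurable borel \<and> (\<forall>x. \<bar>f x\<bar> \<le> B)"

lemma bmD: "bm f B \<Longrightarrow> f \<in> borel_measurable borel" "bm f B \<Longrightarrow> \<bar>f x\<bar> \<le> B"
  by (auto simp: bm_def)

lemma sq_le_bd: "\<bar>a\<bar> \<le> (B::real) \<Longrightarrow> a\<^sup>2 \<le> B\<^sup>2"
proof -
  assume h: "\<bar>a\<bar> \<le> B"
  have "0 \<le> B" using h abs_ge_zero order_trans by blast
  then have "\<bar>a\<bar> \<le> \<bar>B\<bar>" using h by simp
  thus ?thesis by (simp add: abs_le_square_iff)
qed

lemma prob_integrable_bd:
  fixes f :: "'a \<Rightarrow> real"
  assumes "prob_space N" "f \<in> borel_measurable N" "\<And>x. \<bar>f x\<bar> \<le> B"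
  shows "integrable N f"
proof -
  interpret prob_space N by fact
  show ?thesis by (rule integrable_const_bound[where B=B]) (use assms in auto)
qed

lemma prob_abs_int_le:
  fixes f :: "'a \<Rightarrow> real"
  assumes "prob_space N" "f \<in> borel_measurable N" "\<And>x. \<bar>f x\<bar> \<le> B"
  shows "\<bar>\<integral>x. f x \<partial>N\<bar> \<le> B"
proof -
  interpret prob_space N by fact
  have i: "integrable N f" by (rule prob_integrable_bd[OF assms])
  have "(\<integral>x. f x \<partial>N) \<le> B" by (rule integral_le_const[OF i]) (use assms(3) abs_le_D1 in blast)
  moreover have "(\<integral>x. - f x \<partial>N) \<le> B"
    by (rule integral_le_const) (use i assms(3) in \<open>auto simp: abs_le_iff\<close>)
  ultimately show ?thesis by (simp add: abs_le_iff)
qed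

lemma prob_jensen_sq:
  fixes f :: "'a \<Rightarrow> real"
  assumes "prob_space N" and [measurable]: "f \<in> borel_measurable N" and "\<And>x. \<bar>f x\<bar> \<le> B"
  shows "(\<integral>x. f x \<partial>N)\<^sup>2 \<le> (\<integral>x. (f x)\<^sup>2 \<partial>N)"
proof -
  interpret prob_space N by fact
  have i: "integrable N f" by (rule prob_integrable_bd[OF assms])
  have i2: "integrable N (\<lambda>x. (f x)\<^sup>2)"
    by (rule prob_integrable_bd[OF assms(1), where B="B\<^sup>2"])
       (use assms(3) in \<open>auto simp: sq_le_bd\<close>)
  show ?thesis using variance_eq[OF i i2] variance_positive[of f] by simp
qed

context kset begin

lemma Qn_props: "sets (Qn P n x) = sets borel \<and> prob_space (Qn P n x)"
proof (induction n arbitrary: x)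
  case 0 then show ?case by (simp add: prob_space_return)
next
  case (Suc n)
  have sb: "sets (Qn P n x) = sets borel" and pr: "prob_space (Qn P n x)" using Suc by auto
  have km: "Qk P \<in> Qn P n x \<rightarrow>\<^sub>M subprob_algebra borel"
    by (simp add: measurable_cong_sets[OF sb refl])
  have ne: "space (Qn P n x) \<noteq> {}" using prob_space.not_empty[OF pr] .
  have "Qn P (Suc n) x = measure_of UNIV (sets borel) (emeasure (Qn P n x \<bind> Qk P))"
    unfolding Qn.simps
  proof (rule measure_of_eq)
    fix A assume "A \<in> sigma_sets UNIV (sets (borel :: (real^'d) measure))"
    then have A: "A \<in> sets borel" by (metis sets.sigma_sets_eq space_borel)
    show "(\<integral>\<^sup>+ y. emeasure (Qk P y) A \<partial>Qn P n x) = emeasure (Qn P n x \<bind> Qk P) A"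
      by (rule emeasure_bind[OF ne km A, symmetric])
  qed simp
  also have "\<dots> = Qn P n x \<bind> Qk P"
    using measure_of_of_measure[of "Qn P n x \<bind> Qk P"] sets_bind[OF sets_kernel[OF km] ne] space_bind[OF sets_kernel[OF km] ne]
    by simp
  finally have eq: "Qn P (Suc n) x = Qn P n x \<bind> Qk P" .
  have "prob_space (Qn P n x \<bind> Qk P)"
    by (rule prob_space.prob_space_bind[OF pr _ km]) (simp add: Qk_prob)
  then show ?case using eq sets_bind[OF sets_kernel[OF km] ne] by simp
qed

lemma Qn_sets[simp, measurable_cong]: "sets (Qn P n x) = sets borel" using Qn_props by blast
lemma Qn_space[simp]: "space (Qn P n x) = UNIV" using Qn_sets[of n x] sets_eq_imp_space_eq by fastforce
lemma Qn_prob: "prob_space (Qn P n x)" using Qn_props by blast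

lemma Qn_meas_iff[simp]: "f \<in> measurable (Qn P n x) N \<longleftrightarrow> f \<in> measurable borel N"
  by (simp add: measurable_cong_sets[OF Qn_sets refl])
lemma Qk_meas_iff[simp]: "f \<in> measurable (Qk P x) N \<longleftrightarrow> f \<in> measurable borel N"
  by (simp add: measurable_cong_sets[OF Qk_sets refl])

lemma Qn_Suc: "Qn P (Suc n) x = Qn P n x \<bind> Qk P"
proof -
  have km: "Qk P \<in> Qn P n x \<rightarrow>\<^sub>M subprob_algebra borel"
    by (simp add: measurable_cong_sets[OF Qn_sets refl])
  have ne: "space (Qn P n x) \<noteq> {}" by simp
  have "Qn P (Suc n) x = measure_of UNIV (sets borel) (emeasure (Qn P n x \<bind> Qk P))"
    unfolding Qn.simps
  proof (rule measure_of_eq)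
    fix A assume "A \<in> sigma_sets UNIV (sets (borel :: (real^'d) measure))"
    then have A: "A \<in> sets borel" by (metis sets.sigma_sets_eq space_borel)
    show "(\<integral>\<^sup>+ y. emeasure (Qk P y) A \<partial>Qn P n x) = emeasure (Qn P n x \<bind> Qk P) A"
      by (rule emeasure_bind[OF ne km A, symmetric])
  qed simp
  also have "\<dots> = Qn P n x \<bind> Qk P"
    using measure_of_of_measure[of "Qn P n x \<bind> Qk P"] sets_bind[OF sets_kernel[OF km] ne] space_bind[OF sets_kernel[OF km] ne]
    by simp
  finally show ?thesis .
qed

lemma Qn_meas[measurable]: "Qn P n \<in> borel \<rightarrow>\<^sub>M subprob_algebra borel"
proof (induction n)
  case 0 show ?case by (simp add: return_measurable)
next
  case (Suc n)
  have "(\<lambda>x. Qn P n x \<bind> Qk P) \<in> borel \<rightarrow>\<^sub>M subprob_algebra borel"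
    by (rule measurable_bind2[OF Suc Qk_meas])
  then show ?case by (simp add: Qn_Suc[abs_def])
qed

definition "Qf f y = (\<integral>z. f z \<partial>Qk P y)"

lemma Qf_bm: assumes "bm f B" shows "bm (Qf f) B"
proof -
  have [measurable]: "f \<in> borel_measurable borel" using bmD(1)[OF assms] .
  have "(\<lambda>y. Qf f y) \<in> borel_measurable borel"
    unfolding Qf_def by (rule measurable_compose[OF Qk_meas integral_measurable_subprob_algebra]) simp
  moreover have "\<bar>Qf f y\<bar> \<le> B" for y
    unfolding Qf_def by (rule prob_abs_int_le[OF Qk_prob]) (auto simp: bmD(2)[OF assms])
  ultimately show ?thesis by (simp add: bm_def)
qed

lemma Qpow_0: "f \<in> borel_measurable borel \<Longrightarrow> Qpow P 0 f x = f x"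
  unfolding Qpow_def by (simp add: integral_return)

lemma Qpow_Suc: assumes "bm f B" shows "Qpow P (Suc n) f x = Qpow P n (Qf f) x"
proof -
  have [measurable]: "f \<in> borel_measurable borel" using bmD(1)[OF assms] .
  have "Qpow P (Suc n) f x = (\<integral>y. f y \<partial>(Qn P n x \<bind> Qk P))"
    unfolding Qpow_def Qn_Suc ..
  also have "\<dots> = (\<integral>y. (\<integral>z. f z \<partial>Qk P y) \<partial>Qn P n x)"
    by (rule integral_bind[where B=B and B'=1 and K=borel and N="Qk P"])
       (auto simp: bmD(2)[OF assms] measurable_cong_sets[OF Qn_sets refl] Qn_prob prob_space_imp_subprob_space
             intro: prob_space.finite_measure
             intro!: AE_I2 order.eq_iff[THEN iffD1, THEN conjunct1] prob_space.emeasure_space_1[OF Qk_prob, simplified])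
  finally show ?thesis unfolding Qpow_def Qf_def .
qed

lemma Qpow_bm: "bm f B \<Longrightarrow> bm (Qpow P n f) B"
proof (induction n arbitrary: f)
  case 0
  have "Qpow P 0 f = f" by (simp add: fun_eq_iff Qpow_0 bmD(1)[OF 0])
  then show ?case using 0 by simp
next
  case (Suc n)
  have "Qpow P (Suc n) f = Qpow P n (Qf f)" using Qpow_Suc[OF Suc.prems] by (simp add: fun_eq_iff)
  with Suc.IH[OF Qf_bm[OF Suc.prems]] show ?case by simp
qed

lemma Qpow_1: "bm f B \<Longrightarrow> Qpow P 1 f x = Qf f x"
  using Qpow_Suc[of f B 0 x] by (simp add: Qpow_0 bmD Qf_bm[THEN bmD(1)])

lemma Qpow_add: "bm f B \<Longrightarrow> Qpow P (a + b) f x = Qpow P a (Qpow P b f) x"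
proof (induction b arbitrary: f x)
  case 0
  have "Qpow P 0 f = f" using Qpow_0[OF bmD(1)[OF 0]] by (simp add: fun_eq_iff)
  then show ?case by simp
next
  case (Suc b)
  have "Qpow P (a + Suc b) f x = Qpow P (Suc (a + b)) f x" by simp
  also have "\<dots> = Qpow P (a + b) (Qf f) x" by (rule Qpow_Suc[OF Suc.prems])
  also have "\<dots> = Qpow P a (Qpow P b (Qf f)) x" by (rule Suc.IH[OF Qf_bm[OF Suc.prems]])
  also have "Qpow P b (Qf f) = Qpow P (Suc b) f" using Qpow_Suc[OF Suc.prems] by (simp add: fun_eq_iff)
  finally show ?case .
qed

lemma Qpow_Suc': "bm f B \<Longrightarrow> Qpow P (Suc n) f x = Qf (Qpow P n f) x"
  using Qpow_add[of f B 1 n x] Qpow_1[OF Qpow_bm] by simp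

lemma Qpow_lin: assumes "bm f B"
  shows "Qpow P n (\<lambda>y. c * f y + d) x = c * Qpow P n f x + d"
proof -
  interpret prob_space "Qn P n x" by (rule Qn_prob)
  have i: "integrable (Qn P n x) f"
    by (rule prob_integrable_bd[OF Qn_prob _ bmD(2)[OF assms]]) (simp add: bmD(1)[OF assms])
  show ?thesis unfolding Qpow_def using i prob_space by simp
qed

lemma Qpow_mono: assumes "bm f B" "bm g B'" "\<And>y. f y \<le> g y"
  shows "Qpow P n f x \<le> Qpow P n g x"
proof -
  have i: "integrable (Qn P n x) f"
    by (rule prob_integrable_bd[OF Qn_prob _ bmD(2)[OF assms(1)]]) (simp add: bmD(1)[OF assms(1)])
  have j: "integrable (Qn P n x) g"
    by (rule prob_integrable_bd[OF Qn_prob _ bmD(2)[OF assms(2)]]) (simp add: bmD(1)[OF assms(2)])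
  show ?thesis unfolding Qpow_def by (rule integral_mono[OF i j assms(3)])
qed

lemma Qpow_jensen: assumes "bm f B"
  shows "(Qpow P n f x)\<^sup>2 \<le> Qpow P n (\<lambda>y. (f y)\<^sup>2) x"
  unfolding Qpow_def
  by (rule prob_jensen_sq[OF Qn_prob _ bmD(2)[OF assms]]) (simp add: bmD(1)[OF assms])

lemma bm_sq: "bm f B \<Longrightarrow> bm (\<lambda>y. (f y)\<^sup>2) (B\<^sup>2)"
  unfolding bm_def by (auto simp: sq_le_bd)

lemma bm_lin: "bm f B \<Longrightarrow> bm (\<lambda>y. c * f y + d) (\<bar>c\<bar> * B + \<bar>d\<bar>)"
  unfolding bm_def
  by (auto intro!: order.trans[OF abs_triangle_ineq] add_mono simp: abs_mult mult_left_mono)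

end


lemma Gen_finite'[simp]: "finite {u::bool list. length u = k}"
  using finite_lists_length_eq[of "UNIV::bool set" k] by simp

lemma two_half_enn: "(2::ennreal) * (a / 2) = a"
proof -
  have "(2::ennreal) * (a / 2) = (a * 2) / 2" by (simp add: ennreal_times_divide mult.commute)
  also have "\<dots> = a" by (rule ennreal_mult_divide_eq) simp_all
  finally show ?thesis .
qed

lemma Gen_finite[simp]: "finite (Gen k)"
proof -
  have "Gen k = {xs. set xs \<subseteq> (UNIV::bool set) \<and> length xs = k}" by (auto simp: Gen_def)
  then show ?thesis using finite_lists_length_eq[of "UNIV::bool set" k] by simp
qed

lemma Gen_card: "card (Gen k) = 2 ^ k"
proof -
  have "Gen k = {xs. set xs \<subseteq> (UNIV::bool set) \<and> length xs = k}" by (auto simp: Gen_def)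
  then show ?thesis using card_lists_length_eq[of "UNIV::bool set" k] by simp
qed

lemma Gen_0: "Gen 0 = {[]}" by (auto simp: Gen_def)

lemma Gen_Suc_eq: "Gen (Suc k) = (\<lambda>i. i @ [False]) ` Gen k \<union> (\<lambda>i. i @ [True]) ` Gen k"
proof (rule set_eqI)
  fix u show "u \<in> Gen (Suc k) \<longleftrightarrow> u \<in> (\<lambda>i. i @ [False]) ` Gen k \<union> (\<lambda>i. i @ [True]) ` Gen k"
  proof
    assume "u \<in> Gen (Suc k)"
    then have "length u = Suc k" by (simp add: Gen_def)
    then obtain i b where "u = i @ [b]" "length i = k"
      by (metis length_Suc_conv_rev length_rev rev.simps(2) rev_rev_ident)
    then show "u \<in> (\<lambda>i. i @ [False]) ` Gen k \<union> (\<lambda>i. i @ [True]) ` Gen k"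
      by (cases b) (auto simp: Gen_def)
  qed (auto simp: Gen_def)
qed

lemma sum_Gen_Suc: "(\<Sum>u\<in>Gen (Suc k). F u) = (\<Sum>i\<in>Gen k. F (i @ [False]) + F (i @ [True]))"
proof -
  have d: "(\<lambda>i. i @ [False]) ` Gen k \<inter> (\<lambda>i. i @ [True]) ` Gen k = {}" by auto
  have "(\<Sum>u\<in>Gen (Suc k). F u) = (\<Sum>u\<in>(\<lambda>i. i @ [False]) ` Gen k. F u) + (\<Sum>u\<in>(\<lambda>i. i @ [True]) ` Gen k. F u)"
    unfolding Gen_Suc_eq by (rule sum.union_disjoint) (use d in auto)
  also have "\<dots> = (\<Sum>i\<in>Gen k. F (i @ [False])) + (\<Sum>i\<in>Gen k. F (i @ [True]))"
    by (subst sum.reindex, simp add: inj_on_def, subst sum.reindex, simp add: inj_on_def) simp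
  finally show ?thesis by (simp add: sum.distrib)
qed

lemma Tree_Gen: "Tree n = (\<Union>k\<le>n. Gen k)" by (auto simp: Tree_def Gen_def)

lemma sum_Tree: "(\<Sum>u\<in>Tree n. F u) = (\<Sum>k\<le>n. \<Sum>u\<in>Gen k. F u)"
  unfolding Tree_Gen by (rule sum.UNION_disjoint) (auto simp: Gen_def)

lemma Tree_card: "card (Tree n) = 2 ^ (Suc n) - 1"
proof -
  have "card (Tree n) = (\<Sum>k\<le>n. card (Gen k))"
    using sum_Tree[of "\<lambda>_. 1::nat" n] by simp
  also have "\<dots> = (\<Sum>k\<le>n. 2 ^ k)" by (simp add: Gen_card)
  also have "\<dots> = 2 ^ Suc n - 1" by (induction n) auto
  finally show ?thesis .
qed

context kset begin

lemma real_avg: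
  assumes "bm f B"
  shows "(\<integral>yz. f (fst yz) \<partial>P x) + (\<integral>yz. f (snd yz) \<partial>P x) = 2 * Qf f x"
proof -
  have fm[measurable]: "f \<in> borel_measurable borel" using bmD(1)[OF assms] .
  have fb: "\<bar>f y\<bar> \<le> B" for y using bmD(2)[OF assms] .
  define g where "g y = f y + B" for y
  have gm[measurable]: "g \<in> borel_measurable borel" unfolding g_def by simp
  have g0: "0 \<le> g y" for y using fb[of y] unfolding g_def by linarith
  have gb: "\<bar>g y\<bar> \<le> 2 * B" for y using fb[of y] unfolding g_def by linarith
  interpret Px: prob_space "P x" by (rule P_prob)
  interpret Qx: prob_space "Qk P x" by (rule Qk_prob)
  have P_iff[simp]: "h \<in> measurable (P x) N \<longleftrightarrow> h \<in> measurable borel N" for h N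
    by (simp add: measurable_cong_sets[OF P_sets refl])
  have i1: "integrable (P x) (\<lambda>yz. g (fst yz))"
    by (rule prob_integrable_bd[OF P_prob _ gb]) simp
  have i2: "integrable (P x) (\<lambda>yz. g (snd yz))"
    by (rule prob_integrable_bd[OF P_prob _ gb]) simp
  have i3: "integrable (Qk P x) g"
    by (rule prob_integrable_bd[OF Qk_prob _ gb]) simp
  have "ennreal (\<integral>yz. g (fst yz) \<partial>P x) + ennreal (\<integral>yz. g (snd yz) \<partial>P x)
      = (\<integral>\<^sup>+yz. ennreal (g (fst yz)) \<partial>P x) + (\<integral>\<^sup>+yz. ennreal (g (snd yz)) \<partial>P x)"
    using i1 i2 g0 by (simp add: nn_integral_eq_integral)
  also have "\<dots> = (\<integral>\<^sup>+y. q2 x y * ennreal (g y) \<partial>\<mu>M)"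
    by (rule nn_avg) simp
  also have "\<dots> = (\<integral>\<^sup>+y. 2 * (qq x y * ennreal (g y)) \<partial>\<mu>M)"
    by (intro nn_integral_cong) (simp add: qq_def mult.assoc[symmetric] two_half_enn)
  also have "\<dots> = 2 * (\<integral>\<^sup>+y. ennreal (g y) \<partial>Qk P x)"
    by (subst nn_integral_cmult) (auto simp: Qk_density nn_integral_density)
  also have "\<dots> = ennreal (2 * (\<integral>y. g y \<partial>Qk P x))"
    using i3 g0 by (simp add: nn_integral_eq_integral ennreal_mult)
  finally have "ennreal ((\<integral>yz. g (fst yz) \<partial>P x) + (\<integral>yz. g (snd yz) \<partial>P x)) = ennreal (2 * (\<integral>y. g y \<partial>Qk P x))"
    using g0 by (simp add: ennreal_plus)
  then have eq: "(\<integral>yz. g (fst yz) \<partial>P x) + (\<integral>yz. g (snd yz) \<partial>P x) = 2 * (\<integral>y. g y \<partial>Qk P x)"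
    using g0 by (subst (asm) ennreal_inj) (auto intro!: add_nonneg_nonneg integral_nonneg)
  have j1: "integrable (P x) (\<lambda>yz. f (fst yz))"
    by (rule prob_integrable_bd[OF P_prob _ fb]) simp
  have j2: "integrable (P x) (\<lambda>yz. f (snd yz))"
    by (rule prob_integrable_bd[OF P_prob _ fb]) simp
  have j3: "integrable (Qk P x) f"
    by (rule prob_integrable_bd[OF Qk_prob _ fb]) simp
  have "measure (P x) UNIV = 1" using Px.prob_space by simp
  moreover have "measure (Qk P x) UNIV = 1" using Qx.prob_space by simp
  ultimately show ?thesis using eq j1 j2 j3 unfolding g_def Qf_def
    by simp
qed

end

locale kset2 = kset +
  assumes inv: "Q_invariant_prob P \<mu>M"
begin

lemma bind_inv: "\<mu>M \<bind> Qk P = \<mu>M"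
proof (rule measure_eqI)
  have ne: "space \<mu>M \<noteq> {}" by simp
  have km: "Qk P \<in> \<mu>M \<rightarrow>\<^sub>M subprob_algebra borel"
    by (simp add: measurable_cong_sets[OF sets_muM refl])
  show "sets (\<mu>M \<bind> Qk P) = sets \<mu>M" using sets_bind[OF sets_kernel[OF km] ne] by simp
  fix A assume "A \<in> sets (\<mu>M \<bind> Qk P)"
  then have A: "A \<in> sets borel" using sets_bind[OF sets_kernel[OF km] ne] by simp
  show "emeasure (\<mu>M \<bind> Qk P) A = emeasure \<mu>M A"
    using emeasure_bind[OF ne km A] inv A unfolding Q_invariant_prob_def by simp
qed

lemma int_Qf_inv: assumes "bm f B" shows "(\<integral>x. Qf f x \<partial>\<mu>M) = (\<integral>x. f x \<partial>\<mu>M)"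
proof -
  have [measurable]: "f \<in> borel_measurable borel" using bmD(1)[OF assms] .
  have "(\<integral>x. f x \<partial>\<mu>M) = (\<integral>x. f x \<partial>(\<mu>M \<bind> Qk P))" by (simp add: bind_inv)
  also have "\<dots> = (\<integral>x. Qf f x \<partial>\<mu>M)" unfolding Qf_def
    by (rule integral_bind[where B=B and B'=1 and K=borel and N="Qk P"])
       (auto simp: bmD(2)[OF assms] measurable_cong_sets[OF sets_muM refl]
             intro: prob_space.finite_measure[OF mu_prob]
             intro!: AE_I2 order.eq_iff[THEN iffD1, THEN conjunct1] prob_space.emeasure_space_1[OF Qk_prob, simplified])
  finally show ?thesis ..
qed

lemma int_Qpow_inv: "bm f B \<Longrightarrow> (\<integral>x. Qpow P n f x \<partial>\<mu>M) = (\<integral>x. f x \<partial>\<mu>M)"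
proof (induction n arbitrary: f)
  case 0 then show ?case by (simp add: Qpow_0 bmD(1))
next
  case (Suc n)
  have "(\<integral>x. Qpow P (Suc n) f x \<partial>\<mu>M) = (\<integral>x. Qpow P n (Qf f) x \<partial>\<mu>M)"
    by (simp add: Qpow_Suc[OF Suc.prems])
  also have "\<dots> = (\<integral>x. Qf f x \<partial>\<mu>M)" by (rule Suc.IH[OF Qf_bm[OF Suc.prems]])
  also have "\<dots> = (\<integral>x. f x \<partial>\<mu>M)" by (rule int_Qf_inv[OF Suc.prems])
  finally show ?case .
qed

end

locale kset3 = kset2 +
  fixes \<nu> and k0 :: nat and \<nu>0 and B\<nu> :: real
  assumes nu_prob: "prob_space \<nu>" and nu_sets: "sets \<nu> = sets borel"
    and nu0_meas: "\<nu>0 \<in> borel_measurable borel"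
    and nu0_bd: "AE y in \<mu>M. \<bar>\<nu>0 y\<bar> \<le> B\<nu>"
    and nu0_dens: "mQn \<nu> P k0 = density \<mu>M (\<lambda>y. ennreal (\<nu>0 y))"
begin

lemma mQn_bind: "mQn \<nu> P k = \<nu> \<bind> Qn P k"
proof -
  have ne: "space \<nu> \<noteq> {}" using prob_space.not_empty[OF nu_prob] .
  have km: "Qn P k \<in> \<nu> \<rightarrow>\<^sub>M subprob_algebra borel"
    by (simp add: measurable_cong_sets[OF nu_sets refl])
  have "mQn \<nu> P k = measure_of UNIV (sets borel) (emeasure (\<nu> \<bind> Qn P k))"
    unfolding mQn_def
  proof (rule measure_of_eq)
    fix A :: "(real, 'a) vec set" assume "A \<in> sigma_sets UNIV (sets borel)"
    then have A: "A \<in> sets borel" by (metis sets.sigma_sets_eq space_borel)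
    show "(\<integral>\<^sup>+ y. emeasure (Qn P k y) A \<partial>\<nu>) = emeasure (\<nu> \<bind> Qn P k) A"
      by (rule emeasure_bind[OF ne km A, symmetric])
  qed simp
  also have "\<dots> = \<nu> \<bind> Qn P k"
    using measure_of_of_measure[of "\<nu> \<bind> Qn P k"] sets_bind[OF sets_kernel[OF km] ne] space_bind[OF sets_kernel[OF km] ne]
    by simp
  finally show ?thesis .
qed

lemma int_mQn: assumes "bm f B" shows "(\<integral>x. f x \<partial>mQn \<nu> P k) = (\<integral>x. Qpow P k f x \<partial>\<nu>)"
proof -
  have [measurable]: "f \<in> borel_measurable borel" using bmD(1)[OF assms] .
  show ?thesis unfolding mQn_bind Qpow_def
    by (rule integral_bind[where B=B and B'=1 and K=borel and N="Qn P k"])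
       (auto simp: bmD(2)[OF assms] measurable_cong_sets[OF nu_sets refl]
             intro: prob_space.finite_measure[OF nu_prob]
             intro!: AE_I2 order.eq_iff[THEN iffD1, THEN conjunct1] prob_space.emeasure_space_1[OF Qn_prob, simplified])
qed

lemma nu_bound:
  assumes "bm G B" "\<And>y. 0 \<le> G y" "k0 \<le> l"
  shows "(\<integral>x. Qpow P l G x \<partial>\<nu>) \<le> B\<nu> * (\<integral>x. G x \<partial>\<mu>M)"
proof -
  define H where "H = Qpow P (l - k0) G"
  have Hbm: "bm H B" unfolding H_def by (rule Qpow_bm[OF assms(1)])
  have [measurable]: "H \<in> borel_measurable borel" using bmD(1)[OF Hbm] .
  have H0: "0 \<le> H y" for y
  proof -
    have "Qpow P (l - k0) (\<lambda>y. 0 * G y + 0) y \<le> Qpow P (l - k0) G y"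
      by (rule Qpow_mono[OF bm_lin[OF assms(1)] assms(1)]) (simp add: assms(2))
    then show ?thesis unfolding H_def using Qpow_lin[OF assms(1), of "l-k0" 0 0 y] by simp
  qed
  have [measurable]: "\<nu>0 \<in> borel_measurable borel" by (rule nu0_meas)
  have iH: "integrable \<mu>M H"
    by (rule prob_integrable_bd[OF mu_prob _ bmD(2)[OF Hbm]]) (simp add: measurable_cong_sets[OF sets_muM refl])
  have "(\<integral>x. Qpow P l G x \<partial>\<nu>) = (\<integral>x. Qpow P k0 H x \<partial>\<nu>)"
    unfolding H_def using Qpow_add[OF assms(1), of k0 "l - k0"] assms(3) by simp
  also have "\<dots> = (\<integral>x. H x \<partial>mQn \<nu> P k0)" by (rule int_mQn[OF Hbm, symmetric])
  also have "\<dots> = (\<integral>x. H x \<partial>density \<mu>M (\<lambda>y. ennreal (max 0 (\<nu>0 y))))"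
    by (simp add: nu0_dens ennreal_max_0)
  also have "\<dots> = (\<integral>x. max 0 (\<nu>0 x) * H x \<partial>\<mu>M)"
    by (subst integral_density) (auto simp: measurable_cong_sets[OF sets_muM refl])
  also have "\<dots> \<le> (\<integral>x. B\<nu> * H x \<partial>\<mu>M)"
  proof (rule integral_mono_AE)
    show "integrable \<mu>M (\<lambda>x. B\<nu> * H x)" using iH by simp
    show "integrable \<mu>M (\<lambda>x. max 0 (\<nu>0 x) * H x)"
    proof (rule finite_measure.integrable_const_bound[OF prob_space.finite_measure[OF mu_prob], where B="\<bar>B\<nu>\<bar> * B"])
      show "AE x in \<mu>M. norm (max 0 (\<nu>0 x) * H x) \<le> \<bar>B\<nu>\<bar> * B"
        using nu0_bd
      proof eventually_elim
        case (elim x)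
        have "\<bar>max 0 (\<nu>0 x)\<bar> \<le> \<bar>B\<nu>\<bar>" using elim by auto
        moreover have "\<bar>H x\<bar> \<le> B" using bmD(2)[OF Hbm] .
        ultimately show ?case by (simp add: abs_mult mult_mono')
      qed
    qed (simp add: measurable_cong_sets[OF sets_muM refl])
    show "AE x in \<mu>M. max 0 (\<nu>0 x) * H x \<le> B\<nu> * H x"
      using nu0_bd by eventually_elim (auto intro!: mult_right_mono H0)
  qed
  also have "\<dots> = B\<nu> * (\<integral>x. H x \<partial>\<mu>M)" by simp
  also have "(\<integral>x. H x \<partial>\<mu>M) = (\<integral>x. G x \<partial>\<mu>M)"
    unfolding H_def by (rule int_Qpow_inv[OF assms(1)])
  finally show ?thesis .
qed

end


context kset begin

lemma Pop_meas:
  assumes gm: "(\<lambda>(x, y, z). g x y z) \<in> borel_measurable borel" and gb: "\<And>x y z. \<bar>g x y z\<bar> \<le> B"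
  shows "Pop P g \<in> borel_measurable borel"
proof -
  have sb: "sets (borel \<Otimes>\<^sub>M (borel \<Otimes>\<^sub>M borel)) = sets (borel :: ((real^'d) \<times> (real^'d) \<times> (real^'d)) measure)"
    by (metis borel_prod)
  have gm': "(\<lambda>(x, yz). ennreal (g x (fst yz) (snd yz) + B)) \<in> borel_measurable (borel \<Otimes>\<^sub>M (borel \<Otimes>\<^sub>M borel))"
  proof -
    have "(\<lambda>t. g (fst t) (fst (snd t)) (snd (snd t))) \<in> borel_measurable borel"
    proof -
      have "(\<lambda>(x, y, z). g x y z) = (\<lambda>t. g (fst t) (fst (snd t)) (snd (snd t)))"
        by (auto simp: fun_eq_iff split: prod.splits)
      with gm show ?thesis by simp
    qed
    then have "(\<lambda>t. ennreal (g (fst t) (fst (snd t)) (snd (snd t)) + B)) \<in> borel_measurable (borel \<Otimes>\<^sub>M (borel \<Otimes>\<^sub>M borel))"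
      by (simp add: measurable_cong_sets[OF sb refl])
    then show ?thesis by (simp add: case_prod_beta)
  qed
  have PP: "P \<in> borel \<rightarrow>\<^sub>M subprob_algebra (borel \<Otimes>\<^sub>M borel)"
    by (rule measurable_prob_algebraD[OF P_meas])
  have m: "(\<lambda>x. \<integral>\<^sup>+yz. ennreal (g x (fst yz) (snd yz) + B) \<partial>P x) \<in> borel_measurable borel"
    using nn_integral_measurable_subprob_algebra2[OF gm' PP] by simp
  have eq: "Pop P g x = enn2real (\<integral>\<^sup>+yz. ennreal (g x (fst yz) (snd yz) + B) \<partial>P x) - B" for x
  proof -
    interpret Px: prob_space "P x" by (rule P_prob)
    have pairx: "(\<lambda>yz. (x, yz)) \<in> (borel :: ((real^'d) \<times> (real^'d)) measure) \<rightarrow>\<^sub>M (borel :: ((real^'d) \<times> (real^'d) \<times> (real^'d)) measure)"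
      by (intro borel_measurable_continuous_onI continuous_intros)
    have gmx[measurable]: "(\<lambda>yz. g x (fst yz) (snd yz)) \<in> borel_measurable borel"
      using measurable_comp[OF pairx gm] by (simp add: o_def case_prod_beta)
    have i: "integrable (P x) (\<lambda>yz. g x (fst yz) (snd yz))"
      by (rule prob_integrable_bd[OF P_prob _ gb]) (simp add: measurable_cong_sets[OF P_sets refl])
    have "(\<integral>yz. g x (fst yz) (snd yz) + B \<partial>P x) = enn2real (\<integral>\<^sup>+yz. ennreal (g x (fst yz) (snd yz) + B) \<partial>P x)"
    proof (rule integral_eq_nn_integral)
      show "AE yz in P x. 0 \<le> g x (fst yz) (snd yz) + B"
        using gb[of x] by (intro AE_I2) (smt (verit))
    qed (simp add: measurable_cong_sets[OF P_sets refl])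
    moreover have "measure (P x) UNIV = 1" using Px.prob_space by simp
    ultimately show ?thesis using i unfolding Pop_def by simp
  qed
  show ?thesis using m by (subst measurable_cong[OF eq]) auto
qed

lemma Pop_one: "Pop P (\<lambda>_ _ _. 1) x = 1"
proof -
  interpret Px: prob_space "P x" by (rule P_prob)
  have "measure (P x) UNIV = 1" using Px.prob_space by simp
  then show ?thesis unfolding Pop_def by simp
qed

end

locale bmcset = kset3 +
  fixes M and X
  assumes bmc: "bmc M X \<nu> P"
begin

lemma M_prob: "prob_space M" using bmc unfolding bmc_def by blast
lemma X_meas[measurable]: "X u \<in> M \<rightarrow>\<^sub>M borel" using bmc unfolding bmc_def by blast

lemma tree_sub: "subalgebra M (tree_sigma M X k)"
proof -
  let ?G = "{X j -` B \<inter> space M | j B. j \<in> Tree k \<and> B \<in> sets borel}"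
  have G: "?G \<subseteq> Pow (space M)" by auto
  have Gs: "?G \<subseteq> sets M" by (auto intro: measurable_sets[OF X_meas])
  show ?thesis unfolding subalgebra_def tree_sigma_def
    using sets.sigma_sets_subset[OF Gs] space_measure_of_conv G by (auto simp: sets_measure_of[OF G])
qed

lemma X_meas_tree[measurable]: "j \<in> Tree k \<Longrightarrow> X j \<in> tree_sigma M X k \<rightarrow>\<^sub>M borel"
proof -
  assume j: "j \<in> Tree k"
  let ?G = "{X j -` B \<inter> space M | j B. j \<in> Tree k \<and> B \<in> sets borel}"
  have G: "?G \<subseteq> Pow (space M)" by auto
  show ?thesis
  proof (rule measurableI)
    fix x assume "x \<in> space (tree_sigma M X k)"
    show "X j x \<in> space borel" by simp
  next
    fix A :: "(real, 'a) vec set" assume A: "A \<in> sets borel"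
    have "space (tree_sigma M X k) = space M" unfolding tree_sigma_def using G by simp
    moreover have "X j -` A \<inter> space M \<in> sets (tree_sigma M X k)"
      unfolding tree_sigma_def sets_measure_of[OF G] using j A by (intro sigma_sets.Basic) blast
    ultimately show "X j -` A \<inter> space (tree_sigma M X k) \<in> sets (tree_sigma M X k)" by simp
  qed
qed

lemma X3_meas[measurable]:
  assumes "(\<lambda>(x, y, z). G x y z) \<in> borel_measurable borel"
  shows "(\<lambda>\<omega>. G (X w \<omega>) (X w' \<omega>) (X w'' \<omega>)) \<in> borel_measurable M"
proof -
  have "(\<lambda>\<omega>. (X w \<omega>, X w' \<omega>, X w'' \<omega>)) \<in> M \<rightarrow>\<^sub>M borel" by simp
  from measurable_comp[OF this assms] show ?thesis by (simp add: o_def)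
qed

lemma bmc_core:
  fixes g :: "bool list \<Rightarrow> _ \<Rightarrow> _ \<Rightarrow> _ \<Rightarrow> real"
  assumes gm: "\<And>i. i \<in> Gen k \<Longrightarrow> (\<lambda>(x, y, z). g i x y z) \<in> borel_measurable borel"
    and gb: "\<And>i x y z. i \<in> Gen k \<Longrightarrow> \<bar>g i x y z\<bar> \<le> Bg"
    and Zm: "Z \<in> borel_measurable (tree_sigma M X k)" and Zb: "\<And>\<omega>. \<bar>Z \<omega>\<bar> \<le> BZ"
  shows "(\<integral>\<omega>. Z \<omega> * (\<Prod>i\<in>Gen k. g i (X i \<omega>) (X (i @ [False]) \<omega>) (X (i @ [True]) \<omega>)) \<partial>M)
       = (\<integral>\<omega>. Z \<omega> * (\<Prod>i\<in>Gen k. Pop P (g i) (X i \<omega>)) \<partial>M)"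
proof -
  interpret prob_space M by (rule M_prob)
  interpret finite_measure_subalgebra M "tree_sigma M X k"
    by unfold_locales (rule tree_sub)
  define Y where "Y \<omega> = (\<Prod>i\<in>Gen k. g i (X i \<omega>) (X (i @ [False]) \<omega>) (X (i @ [True]) \<omega>))" for \<omega>
  have Ym[measurable]: "Y \<in> borel_measurable M"
    unfolding Y_def by (intro borel_measurable_prod X3_meas gm)
  have Yb: "\<bar>Y \<omega>\<bar> \<le> Bg ^ card (Gen k)" for \<omega>
  proof -
    have "\<bar>Y \<omega>\<bar> = (\<Prod>i\<in>Gen k. \<bar>g i (X i \<omega>) (X (i @ [False]) \<omega>) (X (i @ [True]) \<omega>)\<bar>)"
      unfolding Y_def by (simp add: abs_prod)
    also have "\<dots> \<le> (\<Prod>i\<in>Gen k. Bg)" by (intro prod_mono) (auto simp: gb)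
    finally show ?thesis by simp
  qed
  have Zm'[measurable]: "Z \<in> borel_measurable M" by (rule measurable_from_subalg[OF subalg Zm])
  have iZY: "integrable M (\<lambda>\<omega>. Z \<omega> * Y \<omega>)"
  proof (rule integrable_const_bound[where B="BZ * Bg ^ card (Gen k)"])
    show "AE x in M. norm (Z x * Y x) \<le> BZ * Bg ^ card (Gen k)"
      by (intro AE_I2) (simp add: abs_mult mult_mono' Zb Yb)
  qed simp
  have AEc: "AE \<omega> in M. real_cond_exp M (tree_sigma M X k) Y \<omega> = (\<Prod>i\<in>Gen k. Pop P (g i) (X i \<omega>))"
  proof -
    have "\<forall>i\<in>Gen k. (\<lambda>(x, y, z). g i x y z) \<in> borel_measurable borel \<and> (\<exists>B. \<forall>x y z. \<bar>g i x y z\<bar> \<le> B)"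
      using gm gb by blast
    then show ?thesis using bmc unfolding bmc_def Y_def by blast
  qed
  have Popm[measurable]: "(\<lambda>\<omega>. \<Prod>i\<in>Gen k. Pop P (g i) (X i \<omega>)) \<in> borel_measurable M"
  proof (intro borel_measurable_prod)
    fix i assume i: "i \<in> Gen k"
    have "Pop P (g i) \<in> borel_measurable borel" by (rule Pop_meas[OF gm[OF i] gb[OF i]])
    from measurable_comp[OF X_meas this] show "(\<lambda>\<omega>. Pop P (g i) (X i \<omega>)) \<in> borel_measurable M" by (simp add: o_def)
  qed
  have "(\<integral>\<omega>. Z \<omega> * Y \<omega> \<partial>M) = (\<integral>\<omega>. Z \<omega> * real_cond_exp M (tree_sigma M X k) Y \<omega> \<partial>M)"
    by (rule real_cond_exp_intg(2)[OF iZY Zm Ym, symmetric])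
  also have "\<dots> = (\<integral>\<omega>. Z \<omega> * (\<Prod>i\<in>Gen k. Pop P (g i) (X i \<omega>)) \<partial>M)"
    by (rule integral_cong_AE) (use AEc in auto)
  finally show ?thesis unfolding Y_def .
qed

lemma bmc_single:
  assumes w: "w \<in> Gen k"
    and Gm: "(\<lambda>(x, y, z). G x y z) \<in> borel_measurable borel" and Gb: "\<And>x y z. \<bar>G x y z\<bar> \<le> BG"
    and Zm: "Z \<in> borel_measurable (tree_sigma M X k)" and Zb: "\<And>\<omega>. \<bar>Z \<omega>\<bar> \<le> BZ"
  shows "(\<integral>\<omega>. Z \<omega> * G (X w \<omega>) (X (w @ [False]) \<omega>) (X (w @ [True]) \<omega>) \<partial>M)
       = (\<integral>\<omega>. Z \<omega> * Pop P G (X w \<omega>) \<partial>M)"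
proof -
  define g where "g i = (if i = w then G else (\<lambda>_ _ _. 1::real))" for i
  have gm: "(\<lambda>(x, y, z). g i x y z) \<in> borel_measurable borel" for i
    using Gm by (simp add: g_def)
  have gb: "\<bar>g i x y z\<bar> \<le> max BG 1" for i x y z
    using Gb[of x y z] by (auto simp: g_def)
  have e1: "(\<Prod>i\<in>Gen k. g i (X i \<omega>) (X (i @ [False]) \<omega>) (X (i @ [True]) \<omega>)) = G (X w \<omega>) (X (w @ [False]) \<omega>) (X (w @ [True]) \<omega>)" for \<omega>
  proof -
    have "(\<Prod>i\<in>Gen k. g i (X i \<omega>) (X (i @ [False]) \<omega>) (X (i @ [True]) \<omega>))
        = (\<Prod>i\<in>Gen k. if i = w then G (X i \<omega>) (X (i @ [False]) \<omega>) (X (i @ [True]) \<omega>) else 1)"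
      by (rule prod.cong) (auto simp: g_def)
    also have "\<dots> = G (X w \<omega>) (X (w @ [False]) \<omega>) (X (w @ [True]) \<omega>)"
      using w by (simp add: prod.delta)
    finally show ?thesis .
  qed
  have e2: "(\<Prod>i\<in>Gen k. Pop P (g i) (X i \<omega>)) = Pop P G (X w \<omega>)" for \<omega>
  proof -
    have "(\<Prod>i\<in>Gen k. Pop P (g i) (X i \<omega>)) = (\<Prod>i\<in>Gen k. if i = w then Pop P G (X i \<omega>) else 1)"
      by (rule prod.cong) (auto simp: g_def Pop_one)
    also have "\<dots> = Pop P G (X w \<omega>)" using w by (simp add: prod.delta)
    finally show ?thesis .
  qed
  show ?thesis using bmc_core[of k g, OF gm gb Zm Zb] unfolding e1 e2 .
qed

lemma bmc_pair:
  assumes w: "w \<in> Gen k" and w': "w' \<in> Gen k" and ne: "w \<noteq> w'"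
    and Gm: "(\<lambda>(x, y, z). G x y z) \<in> borel_measurable borel" and Gb: "\<And>x y z. \<bar>G x y z\<bar> \<le> BG"
    and Hm: "(\<lambda>(x, y, z). H x y z) \<in> borel_measurable borel" and Hb: "\<And>x y z. \<bar>H x y z\<bar> \<le> BH"
  shows "(\<integral>\<omega>. G (X w \<omega>) (X (w @ [False]) \<omega>) (X (w @ [True]) \<omega>) * H (X w' \<omega>) (X (w' @ [False]) \<omega>) (X (w' @ [True]) \<omega>) \<partial>M)
       = (\<integral>\<omega>. Pop P G (X w \<omega>) * Pop P H (X w' \<omega>) \<partial>M)"
proof -
  define g where "g i = (if i = w then G else if i = w' then H else (\<lambda>_ _ _. 1::real))" for i
  have gm: "(\<lambda>(x, y, z). g i x y z) \<in> borel_measurable borel" for i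
    using Gm Hm by (simp add: g_def)
  have gb: "\<bar>g i x y z\<bar> \<le> max (max BG BH) 1" for i x y z
    using Gb[of x y z] Hb[of x y z] by (auto simp: g_def)
  have Zm: "(\<lambda>_. 1::real) \<in> borel_measurable (tree_sigma M X k)" by simp
  have sub: "{w, w'} \<subseteq> Gen k" using w w' by simp
  have split: "(\<Prod>i\<in>Gen k. F i) = F w * F w'" if "\<And>i. i \<in> Gen k \<Longrightarrow> i \<noteq> w \<Longrightarrow> i \<noteq> w' \<Longrightarrow> F i = 1" for F :: "bool list \<Rightarrow> real"
  proof -
    have "(\<Prod>i\<in>Gen k. F i) = (\<Prod>i\<in>Gen k - {w, w'}. F i) * (\<Prod>i\<in>{w, w'}. F i)"
      by (rule prod.subset_diff[OF sub]) simp
    also have "(\<Prod>i\<in>Gen k - {w, w'}. F i) = 1" by (rule prod.neutral) (use that in auto)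
    finally show ?thesis using ne by simp
  qed
  have e1: "(\<Prod>i\<in>Gen k. g i (X i \<omega>) (X (i @ [False]) \<omega>) (X (i @ [True]) \<omega>))
     = G (X w \<omega>) (X (w @ [False]) \<omega>) (X (w @ [True]) \<omega>) * H (X w' \<omega>) (X (w' @ [False]) \<omega>) (X (w' @ [True]) \<omega>)" for \<omega>
    by (subst split) (use ne in \<open>auto simp: g_def\<close>)
  have e2: "(\<Prod>i\<in>Gen k. Pop P (g i) (X i \<omega>)) = Pop P G (X w \<omega>) * Pop P H (X w' \<omega>)" for \<omega>
    by (subst split) (use ne in \<open>auto simp: g_def Pop_one\<close>)
  show ?thesis using bmc_core[of k g, OF gm gb Zm, of 1] unfolding e1 e2 by simp
qed

end


definition bdd :: "('b \<Rightarrow> real) \<Rightarrow> bool" where "bdd F \<longleftrightarrow> (\<exists>C. \<forall>\<omega>. \<bar>F \<omega>\<bar> \<le> C)"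

lemma bdd_const[simp]: "bdd (\<lambda>_. c)" unfolding bdd_def by auto
lemma bdd_add: "bdd F \<Longrightarrow> bdd G \<Longrightarrow> bdd (\<lambda>\<omega>. F \<omega> + G \<omega>)"
proof -
  assume "bdd F" "bdd G"
  then obtain C D where C: "\<And>\<omega>. \<bar>F \<omega>\<bar> \<le> C" and D: "\<And>\<omega>. \<bar>G \<omega>\<bar> \<le> D" unfolding bdd_def by blast
  have "\<bar>F \<omega> + G \<omega>\<bar> \<le> C + D" for \<omega> using C[of \<omega>] D[of \<omega>] by linarith
  then show ?thesis unfolding bdd_def by blast
qed
lemma bdd_minus: "bdd F \<Longrightarrow> bdd (\<lambda>\<omega>. - F \<omega>)" unfolding bdd_def by auto
lemma bdd_diff: "bdd F \<Longrightarrow> bdd G \<Longrightarrow> bdd (\<lambda>\<omega>. F \<omega> - G \<omega>)"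
  using bdd_add[OF _ bdd_minus] by simp
lemma bdd_mult: "bdd F \<Longrightarrow> bdd G \<Longrightarrow> bdd (\<lambda>\<omega>. F \<omega> * G \<omega>)"
proof -
  assume "bdd F" "bdd G"
  then obtain C D where C: "\<And>\<omega>. \<bar>F \<omega>\<bar> \<le> C" and D: "\<And>\<omega>. \<bar>G \<omega>\<bar> \<le> D" unfolding bdd_def by blast
  have "\<bar>F \<omega> * G \<omega>\<bar> \<le> C * D" for \<omega> unfolding abs_mult by (rule mult_mono'[OF C D]) auto
  then show ?thesis unfolding bdd_def by blast
qed
lemma bdd_power: "bdd F \<Longrightarrow> bdd (\<lambda>\<omega>. (F \<omega>)\<^sup>2)"
  using bdd_mult[of F F] by (simp add: power2_eq_square)
lemma bdd_sum: "(\<And>i. i \<in> I \<Longrightarrow> bdd (F i)) \<Longrightarrow> bdd (\<lambda>\<omega>. \<Sum>i\<in>I. F i \<omega>)"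
proof (induction I rule: infinite_finite_induct)
  case (insert x I) then show ?case by (simp add: bdd_add)
qed auto
lemma bdd_bm: "bm f B \<Longrightarrow> bdd (\<lambda>\<omega>. f (X \<omega>))" unfolding bdd_def bm_def by blast

context kset begin

lemma Qf_lin: assumes "bm f B" shows "Qf (\<lambda>y. c * f y + d) x = c * Qf f x + d"
  using Qpow_lin[OF assms, of 1 c d x] Qpow_1[OF assms] Qpow_1[OF bm_lin[OF assms]] by simp

lemma Pop_sum: assumes "bm f B" shows "Pop P (\<lambda>x y z. f y + f z) x = 2 * Qf f x"
proof -
  have fm[measurable]: "f \<in> borel_measurable borel" using bmD(1)[OF assms] .
  have P_iff: "h \<in> measurable (P x) N \<longleftrightarrow> h \<in> measurable borel N" for h N
    by (simp add: measurable_cong_sets[OF P_sets refl])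
  have j1: "integrable (P x) (\<lambda>yz. f (fst yz))"
    by (rule prob_integrable_bd[OF P_prob _ bmD(2)[OF assms]]) (simp add: P_iff)
  have j2: "integrable (P x) (\<lambda>yz. f (snd yz))"
    by (rule prob_integrable_bd[OF P_prob _ bmD(2)[OF assms]]) (simp add: P_iff)
  show ?thesis unfolding Pop_def using real_avg[OF assms, of x] j1 j2 by simp
qed

lemma Pop_G0: assumes "bm f B" shows "Pop P (\<lambda>x y z. f y + f z - 2 * Qf f x) x = 0"
proof -
  interpret Px: prob_space "P x" by (rule P_prob)
  have fm[measurable]: "f \<in> borel_measurable borel" using bmD(1)[OF assms] .
  have P_iff: "h \<in> measurable (P x) N \<longleftrightarrow> h \<in> measurable borel N" for h N
    by (simp add: measurable_cong_sets[OF P_sets refl])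
  have j1: "integrable (P x) (\<lambda>yz. f (fst yz) + f (snd yz))"
    by (rule prob_integrable_bd[OF P_prob, where B="2*B"]) (auto simp: P_iff intro: order.trans[OF abs_triangle_ineq] add_mono[OF bmD(2)[OF assms] bmD(2)[OF assms], simplified])
  have "measure (P x) UNIV = 1" using Px.prob_space by simp
  then show ?thesis using Pop_sum[OF assms, of x] j1 unfolding Pop_def by simp
qed

lemma Pop_G2: assumes "bm f B"
  shows "Pop P (\<lambda>x y z. (f y + f z - 2 * Qf f x)\<^sup>2) x \<le> 4 * Qf (\<lambda>y. (f y)\<^sup>2) x"
proof -
  interpret Px: prob_space "P x" by (rule P_prob)
  have fm[measurable]: "f \<in> borel_measurable borel" using bmD(1)[OF assms] .
  have P_iff: "h \<in> measurable (P x) N \<longleftrightarrow> h \<in> measurable borel N" for h N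
    by (simp add: measurable_cong_sets[OF P_sets refl])
  define S where "S yz = f (fst yz) + f (snd yz)" for yz
  have Sb: "\<bar>S yz\<bar> \<le> 2 * B" for yz
    unfolding S_def using bmD(2)[OF assms, of "fst yz"] bmD(2)[OF assms, of "snd yz"] by linarith
  have Sm[measurable]: "S \<in> borel_measurable (P x)" unfolding S_def by (simp add: P_iff)
  have iS: "integrable (P x) S" by (rule prob_integrable_bd[OF P_prob Sm Sb])
  have iS2: "integrable (P x) (\<lambda>yz. (S yz)\<^sup>2)"
  proof (rule prob_integrable_bd[OF P_prob _ , where B="(2*B)\<^sup>2"])
    show "\<bar>(S yz)\<^sup>2\<bar> \<le> (2*B)\<^sup>2" for yz using sq_le_bd[OF Sb[of yz]] by simp
  qed simp
  have ES: "Px.expectation S = 2 * Qf f x" unfolding S_def using Pop_sum[OF assms, of x] unfolding Pop_def by simp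
  have "Pop P (\<lambda>x y z. (f y + f z - 2 * Qf f x)\<^sup>2) x = Px.variance S"
    unfolding Pop_def ES[symmetric] S_def ..
  also have "\<dots> = Px.expectation (\<lambda>yz. (S yz)\<^sup>2) - (Px.expectation S)\<^sup>2"
    by (rule Px.variance_eq[OF iS iS2])
  also have "\<dots> \<le> Px.expectation (\<lambda>yz. (S yz)\<^sup>2)" by simp
  also have "\<dots> \<le> Px.expectation (\<lambda>yz. 2 * (f (fst yz))\<^sup>2 + 2 * (f (snd yz))\<^sup>2)"
  proof (rule integral_mono[OF iS2])
    have b: "bm (\<lambda>y. (f y)\<^sup>2) (B\<^sup>2)" by (rule bm_sq[OF assms])
    show "integrable (P x) (\<lambda>yz. 2 * (f (fst yz))\<^sup>2 + 2 * (f (snd yz))\<^sup>2)"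
    proof (rule prob_integrable_bd[OF P_prob, where B="4 * B\<^sup>2"])
      fix yz
      have "(f (fst yz))\<^sup>2 \<le> B\<^sup>2" "(f (snd yz))\<^sup>2 \<le> B\<^sup>2" using bmD(2)[OF b] by auto
      then show "\<bar>2 * (f (fst yz))\<^sup>2 + 2 * (f (snd yz))\<^sup>2\<bar> \<le> 4 * B\<^sup>2" by simp
    qed (simp add: P_iff)
    show "(S yz)\<^sup>2 \<le> 2 * (f (fst yz))\<^sup>2 + 2 * (f (snd yz))\<^sup>2" for yz
      unfolding S_def by (simp add: power2_sum) (smt (verit) sum_squares_bound)
  qed
  also have "\<dots> = 2 * (Px.expectation (\<lambda>yz. (f (fst yz))\<^sup>2) + Px.expectation (\<lambda>yz. (f (snd yz))\<^sup>2))"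
  proof -
    have b: "bm (\<lambda>y. (f y)\<^sup>2) (B\<^sup>2)" by (rule bm_sq[OF assms])
    have i1: "integrable (P x) (\<lambda>yz. (f (fst yz))\<^sup>2)"
      by (rule prob_integrable_bd[OF P_prob _ bmD(2)[OF b]]) (simp add: P_iff)
    have i2: "integrable (P x) (\<lambda>yz. (f (snd yz))\<^sup>2)"
      by (rule prob_integrable_bd[OF P_prob _ bmD(2)[OF b]]) (simp add: P_iff)
    show ?thesis using i1 i2 by simp
  qed
  also have "\<dots> = 4 * Qf (\<lambda>y. (f y)\<^sup>2) x"
    using real_avg[OF bm_sq[OF assms], of x] by simp
  finally show ?thesis .
qed

end


lemma t1_meas: "f \<in> borel_measurable borel \<Longrightarrow> (\<lambda>t::('a::second_countable_topology \<times> 'b::second_countable_topology \<times> 'c::second_countable_topology). f (fst t)) \<in> borel_measurable borel"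
  using measurable_comp[OF fst_borel] by (simp add: o_def)
lemma t2_meas: "f \<in> borel_measurable borel \<Longrightarrow> (\<lambda>t::('a::second_countable_topology \<times> 'b::second_countable_topology \<times> 'c::second_countable_topology). f (fst (snd t))) \<in> borel_measurable borel"
  using measurable_comp[OF measurable_comp[OF snd_borel fst_borel]] by (simp add: o_def)
lemma t3_meas: "f \<in> borel_measurable borel \<Longrightarrow> (\<lambda>t::('a::second_countable_topology \<times> 'b::second_countable_topology \<times> 'c::second_countable_topology). f (snd (snd t))) \<in> borel_measurable borel"
  using measurable_comp[OF measurable_comp[OF snd_borel snd_borel]] by (simp add: o_def)

lemma G3_meas:
  fixes f :: "'b::second_countable_topology \<Rightarrow> real"
  assumes fm: "f \<in> borel_measurable borel"
  shows "(\<lambda>(x::'c::second_countable_topology, y::'b, z::'b). f y + f z) \<in> borel_measurable borel"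
proof -
  have e3: "(\<lambda>(x::'c, y::'b, z::'b). f y + f z) = (\<lambda>t. f (fst (snd t)) + f (snd (snd t)))"
    by (auto simp: fun_eq_iff split: prod.splits)
  show ?thesis unfolding e3 by (intro borel_measurable_add t2_meas t3_meas fm)
qed

context bmcset begin

lemma intM: "F \<in> borel_measurable M \<Longrightarrow> bdd F \<Longrightarrow> integrable M F"
  unfolding bdd_def using prob_integrable_bd[OF M_prob] by blast

lemma Xbm_meas[measurable]: "bm f B \<Longrightarrow> (\<lambda>\<omega>. f (X u \<omega>)) \<in> borel_measurable M"
  using measurable_comp[OF X_meas bmD(1)] by (simp add: o_def)

lemma Xbm_meas_tree: "bm f B \<Longrightarrow> u \<in> Tree k \<Longrightarrow> (\<lambda>\<omega>. f (X u \<omega>)) \<in> borel_measurable (tree_sigma M X k)"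
  using measurable_comp[OF X_meas_tree bmD(1)] by (simp add: o_def)

lemma Gen_Tree: "u \<in> Gen k \<Longrightarrow> u \<in> Tree k" by (simp add: Gen_def Tree_def)

lemma bdd_X: "bm f B \<Longrightarrow> bdd (\<lambda>\<omega>. f (X u \<omega>))" unfolding bdd_def bm_def by blast

lemma G_meas:
  assumes "bm f B"
  shows "(\<lambda>(x, y, z). f y + f z - 2 * Qf f x) \<in> borel_measurable borel"
    "(\<lambda>(x, y, z). (f y + f z - 2 * Qf f x)\<^sup>2) \<in> borel_measurable borel"
proof -
  have fm: "f \<in> borel_measurable borel" and qm: "Qf f \<in> borel_measurable borel"
    using bmD(1)[OF assms] bmD(1)[OF Qf_bm[OF assms]] by auto
  have e1: "(\<lambda>(x, y, z). f y + f z - 2 * Qf f x) = (\<lambda>t. f (fst (snd t)) + f (snd (snd t)) - 2 * Qf f (fst t))"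
    by (auto simp: fun_eq_iff split: prod.splits)
  have e2: "(\<lambda>(x, y, z). (f y + f z - 2 * Qf f x)\<^sup>2) = (\<lambda>t. (f (fst (snd t)) + f (snd (snd t)) - 2 * Qf f (fst t))\<^sup>2)"
    by (auto simp: fun_eq_iff split: prod.splits)
  have e3: "(\<lambda>(x, y, z). f y + f z) = (\<lambda>t. f (fst (snd t)) + f (snd (snd t)))"
    by (auto simp: fun_eq_iff split: prod.splits)
  have m3: "(\<lambda>t. f (fst (snd t)) + f (snd (snd t))) \<in> borel_measurable (borel :: ((real^'a) \<times> (real^'a) \<times> (real^'a)) measure)"
    by (intro borel_measurable_add t2_meas t3_meas fm)
  have m1: "(\<lambda>t. f (fst (snd t)) + f (snd (snd t)) - 2 * Qf f (fst t)) \<in> borel_measurable (borel :: ((real^'a) \<times> (real^'a) \<times> (real^'a)) measure)"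
    by (intro borel_measurable_diff m3 borel_measurable_times borel_measurable_const t1_meas qm)
  show "(\<lambda>(x, y, z). f y + f z - 2 * Qf f x) \<in> borel_measurable borel" unfolding e1 by (rule m1)
  show "(\<lambda>(x, y, z). (f y + f z - 2 * Qf f x)\<^sup>2) \<in> borel_measurable borel" unfolding e2 unfolding power2_eq_square
    by (rule borel_measurable_times[OF m1 m1])
qed

lemma marg: "bm f B \<Longrightarrow> (\<integral>\<omega>. (\<Sum>u\<in>Gen k. f (X u \<omega>)) \<partial>M) = 2 ^ k * (\<integral>x. Qpow P k f x \<partial>\<nu>)"
proof (induction k arbitrary: f B)
  case 0
  have fm[measurable]: "f \<in> borel_measurable borel" using bmD(1)[OF 0] .
  have nu: "\<nu> = distr M borel (X [])" using bmc unfolding bmc_def by simp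
  have "(\<integral>\<omega>. f (X [] \<omega>) \<partial>M) = (\<integral>x. f x \<partial>\<nu>)" unfolding nu by (rule integral_distr[symmetric]) simp_all
  then show ?case by (simp add: Gen_0 Qpow_0)
next
  case (Suc k)
  have fm[measurable]: "f \<in> borel_measurable borel" using bmD(1)[OF Suc.prems] .
  have Qbm: "bm (Qf f) B" by (rule Qf_bm[OF Suc.prems])
  have "(\<integral>\<omega>. (\<Sum>u\<in>Gen (Suc k). f (X u \<omega>)) \<partial>M) = (\<integral>\<omega>. (\<Sum>i\<in>Gen k. f (X (i @ [False]) \<omega>) + f (X (i @ [True]) \<omega>)) \<partial>M)"
    by (simp add: sum_Gen_Suc)
  also have "\<dots> = (\<Sum>i\<in>Gen k. (\<integral>\<omega>. f (X (i @ [False]) \<omega>) + f (X (i @ [True]) \<omega>) \<partial>M))"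
    by (subst Bochner_Integration.integral_sum) (auto intro!: intM bdd_add bdd_X[OF Suc.prems] Xbm_meas[OF Suc.prems])
  also have "\<dots> = (\<Sum>i\<in>Gen k. (\<integral>\<omega>. 2 * Qf f (X i \<omega>) \<partial>M))"
  proof (rule sum.cong[OF refl])
    fix i assume i: "i \<in> Gen k"
    have bf: "\<bar>f y + f z\<bar> \<le> 2 * B" for y z
      using bmD(2)[OF Suc.prems, of y] bmD(2)[OF Suc.prems, of z] by linarith
    have "(\<integral>\<omega>. 1 * ((\<lambda>x y z. f y + f z) (X i \<omega>) (X (i @ [False]) \<omega>) (X (i @ [True]) \<omega>)) \<partial>M)
        = (\<integral>\<omega>. 1 * Pop P (\<lambda>x y z. f y + f z) (X i \<omega>) \<partial>M)"
      by (rule bmc_single[OF i G3_meas[OF fm], where BZ=1]) (use bf in auto)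
    then show "(\<integral>\<omega>. f (X (i @ [False]) \<omega>) + f (X (i @ [True]) \<omega>) \<partial>M) = (\<integral>\<omega>. 2 * Qf f (X i \<omega>) \<partial>M)"
      by (simp add: Pop_sum[OF Suc.prems])
  qed
  also have "\<dots> = 2 * (\<integral>\<omega>. (\<Sum>i\<in>Gen k. Qf f (X i \<omega>)) \<partial>M)"
    by (subst Bochner_Integration.integral_sum) (auto simp: sum_distrib_left intro!: intM bdd_X[OF Qbm] Xbm_meas[OF Qbm])
  also have "\<dots> = 2 * (2 ^ k * (\<integral>x. Qpow P k (Qf f) x \<partial>\<nu>))" by (simp add: Suc.IH[OF Qbm])
  also have "\<dots> = 2 ^ Suc k * (\<integral>x. Qpow P (Suc k) f x \<partial>\<nu>)"
    by (simp add: Qpow_Suc[OF Suc.prems])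
  finally show ?case .
qed

end


context bmcset begin

lemma Qf_bm_scale: "bm f B \<Longrightarrow> Qf (\<lambda>y. c * f y) x = c * Qf f x"
  using Qf_lin[of f B c 0 x] by simp

lemma var_step:
  fixes l :: nat
  assumes Psi: "bm \<Psi> B"
  defines "Yl \<equiv> \<lambda>\<omega>. \<Sum>w\<in>Gen l. 2 * Qf \<Psi> (X w \<omega>)"
  defines "Yl1 \<equiv> \<lambda>\<omega>. \<Sum>u\<in>Gen (Suc l). \<Psi> (X u \<omega>)"
  shows "(\<integral>\<omega>. (Yl1 \<omega>)\<^sup>2 \<partial>M) \<le> (\<integral>\<omega>. (Yl \<omega>)\<^sup>2 \<partial>M) + 2 ^ (Suc l + 1) * (\<integral>x. Qpow P (Suc l) (\<lambda>y. (\<Psi> y)\<^sup>2) x \<partial>\<nu>)"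
proof -
  have QPsi: "bm (Qf \<Psi>) B" by (rule Qf_bm[OF Psi])
  define G where "G x y z = \<Psi> y + \<Psi> z - 2 * Qf \<Psi> x" for x y z
  have Gm: "(\<lambda>(x, y, z). G x y z) \<in> borel_measurable borel" unfolding G_def by (rule G_meas(1)[OF Psi])
  have G2m: "(\<lambda>(x, y, z). (G x y z)\<^sup>2) \<in> borel_measurable borel" unfolding G_def by (rule G_meas(2)[OF Psi])
  have Gb: "\<bar>G x y z\<bar> \<le> 4 * B" for x y z
    unfolding G_def using bmD(2)[OF Psi, of y] bmD(2)[OF Psi, of z] bmD(2)[OF QPsi, of x] by linarith
  have G2b: "\<bar>(G x y z)\<^sup>2\<bar> \<le> (4 * B)\<^sup>2" for x y z using sq_le_bd[OF Gb[of x y z]] by simp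
  define Gi where "Gi i \<omega> = G (X i \<omega>) (X (i @ [False]) \<omega>) (X (i @ [True]) \<omega>)" for i \<omega>
  have Gim[measurable]: "Gi i \<in> borel_measurable M" for i
    unfolding Gi_def by (rule X3_meas[OF Gm])
  have Gib: "bdd (Gi i)" for i unfolding bdd_def Gi_def using Gb by blast
  define D where "D \<omega> = (\<Sum>i\<in>Gen l. Gi i \<omega>)" for \<omega>
  have Dm[measurable]: "D \<in> borel_measurable M" unfolding D_def by simp
  have Db: "bdd D" unfolding D_def by (rule bdd_sum) (rule Gib)
  have Ylm[measurable]: "Yl \<in> borel_measurable M" unfolding Yl_def using Xbm_meas[OF QPsi] by simp
  have Ylb: "bdd Yl" unfolding Yl_def by (intro bdd_sum bdd_mult bdd_const bdd_X[OF QPsi])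
  have Ylt: "Yl \<in> borel_measurable (tree_sigma M X l)"
    unfolding Yl_def
    by (intro borel_measurable_sum borel_measurable_times borel_measurable_const Xbm_meas_tree[OF QPsi] Gen_Tree)
  obtain CY where CY: "\<And>\<omega>. \<bar>Yl \<omega>\<bar> \<le> CY" using Ylb unfolding bdd_def by blast
  have split: "Yl1 \<omega> = Yl \<omega> + D \<omega>" for \<omega>
    unfolding Yl1_def Yl_def D_def Gi_def G_def sum_Gen_Suc by (simp add: sum.distrib[symmetric] sum_subtractf[symmetric])
  have cross: "(\<integral>\<omega>. Yl \<omega> * D \<omega> \<partial>M) = 0"
  proof -
    have "(\<integral>\<omega>. Yl \<omega> * D \<omega> \<partial>M) = (\<Sum>i\<in>Gen l. \<integral>\<omega>. Yl \<omega> * Gi i \<omega> \<partial>M)"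
      unfolding D_def sum_distrib_left
      by (subst Bochner_Integration.integral_sum) (auto intro!: intM bdd_mult Ylb Gib)
    also have "\<dots> = (\<Sum>i\<in>Gen l. 0)"
    proof (rule sum.cong[OF refl])
      fix i assume i: "i \<in> Gen l"
      have "(\<integral>\<omega>. Yl \<omega> * Gi i \<omega> \<partial>M) = (\<integral>\<omega>. Yl \<omega> * Pop P G (X i \<omega>) \<partial>M)"
        unfolding Gi_def by (rule bmc_single[OF i Gm Gb Ylt CY])
      also have "\<dots> = 0" using Pop_G0[OF Psi] unfolding G_def by simp
      finally show "(\<integral>\<omega>. Yl \<omega> * Gi i \<omega> \<partial>M) = 0" .
    qed
    finally show ?thesis by simp
  qed
  have DD: "(\<integral>\<omega>. (D \<omega>)\<^sup>2 \<partial>M) \<le> 2 ^ (Suc l + 1) * (\<integral>x. Qpow P (Suc l) (\<lambda>y. (\<Psi> y)\<^sup>2) x \<partial>\<nu>)"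
  proof -
    have "(\<integral>\<omega>. (D \<omega>)\<^sup>2 \<partial>M) = (\<integral>\<omega>. (\<Sum>i\<in>Gen l. \<Sum>j\<in>Gen l. Gi i \<omega> * Gi j \<omega>) \<partial>M)"
      unfolding D_def power2_eq_square sum_product ..
    also have "\<dots> = (\<Sum>i\<in>Gen l. \<Sum>j\<in>Gen l. \<integral>\<omega>. Gi i \<omega> * Gi j \<omega> \<partial>M)"
      by (subst Bochner_Integration.integral_sum, auto intro!: intM bdd_sum bdd_mult Gib,
          subst Bochner_Integration.integral_sum, auto intro!: intM bdd_mult Gib)
    also have "\<dots> = (\<Sum>i\<in>Gen l. \<Sum>j\<in>Gen l. if i = j then (\<integral>\<omega>. Pop P (\<lambda>x y z. (G x y z)\<^sup>2) (X i \<omega>) \<partial>M) else 0)"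
    proof (intro sum.cong refl)
      fix i j assume i: "i \<in> Gen l" and j: "j \<in> Gen l"
      show "(\<integral>\<omega>. Gi i \<omega> * Gi j \<omega> \<partial>M) = (if i = j then (\<integral>\<omega>. Pop P (\<lambda>x y z. (G x y z)\<^sup>2) (X i \<omega>) \<partial>M) else 0)"
      proof (cases "i = j")
        case True
        have "(\<integral>\<omega>. 1 * (\<lambda>x y z. (G x y z)\<^sup>2) (X i \<omega>) (X (i @ [False]) \<omega>) (X (i @ [True]) \<omega>) \<partial>M)
            = (\<integral>\<omega>. 1 * Pop P (\<lambda>x y z. (G x y z)\<^sup>2) (X i \<omega>) \<partial>M)"
          by (rule bmc_single[OF i G2m G2b, where BZ=1]) auto
        then show ?thesis using True unfolding Gi_def by (simp add: power2_eq_square)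
      next
        case False
        have "(\<integral>\<omega>. Gi i \<omega> * Gi j \<omega> \<partial>M) = (\<integral>\<omega>. Pop P G (X i \<omega>) * Pop P G (X j \<omega>) \<partial>M)"
          unfolding Gi_def by (rule bmc_pair[OF i j False Gm Gb Gm Gb])
        also have "\<dots> = 0" using Pop_G0[OF Psi] unfolding G_def by simp
        finally show ?thesis using False by simp
      qed
    qed
    also have "\<dots> = (\<Sum>i\<in>Gen l. \<integral>\<omega>. Pop P (\<lambda>x y z. (G x y z)\<^sup>2) (X i \<omega>) \<partial>M)"
      by (simp add: sum.delta)
    also have "\<dots> \<le> (\<Sum>i\<in>Gen l. \<integral>\<omega>. 4 * Qf (\<lambda>y. (\<Psi> y)\<^sup>2) (X i \<omega>) \<partial>M)"
    proof (rule sum_mono, rule integral_mono)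
      fix i
      have pm: "Pop P (\<lambda>x y z. (G x y z)\<^sup>2) \<in> borel_measurable borel"
        by (rule Pop_meas[OF G2m G2b])
      have pb: "\<bar>Pop P (\<lambda>x y z. (G x y z)\<^sup>2) x\<bar> \<le> (4 * B)\<^sup>2" for x
      proof -
        have pairx: "(\<lambda>yz. (x, yz)) \<in> borel \<rightarrow>\<^sub>M borel"
          by (intro borel_measurable_continuous_onI continuous_intros)
        have "(\<lambda>yz. (G x (fst yz) (snd yz))\<^sup>2) \<in> borel_measurable borel"
          using measurable_comp[OF pairx G2m] by (simp add: o_def case_prod_beta)
        then show ?thesis
          unfolding Pop_def by (intro prob_abs_int_le[OF P_prob _ G2b]) (simp add: measurable_cong_sets[OF P_sets refl])
      qed
      show "integrable M (\<lambda>\<omega>. Pop P (\<lambda>x y z. (G x y z)\<^sup>2) (X i \<omega>))"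
        by (rule intM) (use measurable_comp[OF X_meas pm] pb in \<open>auto simp: o_def bdd_def\<close>)
      have qb: "bm (Qf (\<lambda>y. (\<Psi> y)\<^sup>2)) (B\<^sup>2)" by (rule Qf_bm[OF bm_sq[OF Psi]])
      show "integrable M (\<lambda>\<omega>. 4 * Qf (\<lambda>y. (\<Psi> y)\<^sup>2) (X i \<omega>))"
        by (intro intM bdd_mult bdd_const bdd_X[OF qb] borel_measurable_times borel_measurable_const Xbm_meas[OF qb])
      show "Pop P (\<lambda>x y z. (G x y z)\<^sup>2) (X i \<omega>) \<le> 4 * Qf (\<lambda>y. (\<Psi> y)\<^sup>2) (X i \<omega>)" for \<omega>
        using Pop_G2[OF Psi] unfolding G_def .
    qed
    also have "\<dots> = 4 * (\<integral>\<omega>. (\<Sum>i\<in>Gen l. Qf (\<lambda>y. (\<Psi> y)\<^sup>2) (X i \<omega>)) \<partial>M)"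
    proof -
      have qb: "bm (Qf (\<lambda>y. (\<Psi> y)\<^sup>2)) (B\<^sup>2)" by (rule Qf_bm[OF bm_sq[OF Psi]])
      show ?thesis
        by (subst Bochner_Integration.integral_sum) (auto simp: sum_distrib_left intro!: intM bdd_X[OF qb] Xbm_meas[OF qb])
    qed
    also have "\<dots> = 4 * (2 ^ l * (\<integral>x. Qpow P l (Qf (\<lambda>y. (\<Psi> y)\<^sup>2)) x \<partial>\<nu>))"
      using marg[OF Qf_bm[OF bm_sq[OF Psi]]] by simp
    also have "\<dots> = 2 ^ (Suc l + 1) * (\<integral>x. Qpow P (Suc l) (\<lambda>y. (\<Psi> y)\<^sup>2) x \<partial>\<nu>)"
      using Qpow_Suc[OF bm_sq[OF Psi]] by simp
    finally show ?thesis .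
  qed
  have "(\<integral>\<omega>. (Yl1 \<omega>)\<^sup>2 \<partial>M) = (\<integral>\<omega>. (Yl \<omega>)\<^sup>2 + 2 * (Yl \<omega> * D \<omega>) + (D \<omega>)\<^sup>2 \<partial>M)"
    unfolding split by (rule Bochner_Integration.integral_cong) (simp_all add: power2_sum)
  also have "\<dots> = (\<integral>\<omega>. (Yl \<omega>)\<^sup>2 \<partial>M) + 2 * (\<integral>\<omega>. Yl \<omega> * D \<omega> \<partial>M) + (\<integral>\<omega>. (D \<omega>)\<^sup>2 \<partial>M)"
    by (subst Bochner_Integration.integral_add, auto intro!: intM bdd_add bdd_mult bdd_power Ylb Db,
        subst Bochner_Integration.integral_add, auto intro!: intM bdd_mult bdd_power Ylb Db)
  also have "\<dots> \<le> (\<integral>\<omega>. (Yl \<omega>)\<^sup>2 \<partial>M) + 2 ^ (Suc l + 1) * (\<integral>x. Qpow P (Suc l) (\<lambda>y. (\<Psi> y)\<^sup>2) x \<partial>\<nu>)"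
    using cross DD by simp
  finally show ?thesis .
qed

lemma pow4: "(2::real) ^ (k * 2) = 4 ^ k"
proof -
  have "(4::real) ^ k = (2 ^ 2) ^ k" by simp
  also have "\<dots> = 2 ^ (2 * k)" by (simp add: power_mult)
  finally show ?thesis by (simp add: mult.commute)
qed

lemma var_bound:
  assumes phi: "bm \<phi> B"
  shows "(\<integral>\<omega>. (\<Sum>u\<in>Gen k. \<phi> (X u \<omega>))\<^sup>2 \<partial>M)
     \<le> (\<Sum>j\<le>k. 2 ^ (j + 1) * 4 ^ (k - j) * (\<integral>x. Qpow P j (\<lambda>y. (Qpow P (k - j) \<phi> y)\<^sup>2) x \<partial>\<nu>))"
proof -
  define Y where "Y l \<omega> = (\<Sum>w\<in>Gen l. 2 ^ (k - l) * Qpow P (k - l) \<phi> (X w \<omega>))" for l \<omega>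
  define V where "V l = (\<Sum>j\<le>l. 2 ^ (j + 1) * 4 ^ (k - j) * (\<integral>x. Qpow P j (\<lambda>y. (Qpow P (k - j) \<phi> y)\<^sup>2) x \<partial>\<nu>))" for l
  have main: "l \<le> k \<Longrightarrow> (\<integral>\<omega>. (Y l \<omega>)\<^sup>2 \<partial>M) \<le> V l" for l
  proof (induction l)
    case 0
    have Pb: "bm (Qpow P k \<phi>) B" by (rule Qpow_bm[OF phi])
    have Pb2: "bm (\<lambda>y. (Qpow P k \<phi> y)\<^sup>2) (B\<^sup>2)" by (rule bm_sq[OF Pb])
    have Pb3: "bm (\<lambda>y. 4 ^ k * (Qpow P k \<phi> y)\<^sup>2 + 0) (\<bar>4 ^ k\<bar> * B\<^sup>2 + \<bar>0\<bar>)" by (rule bm_lin[OF Pb2])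
    have "(\<integral>\<omega>. (Y 0 \<omega>)\<^sup>2 \<partial>M) = (\<integral>\<omega>. (\<Sum>u\<in>Gen 0. 4 ^ k * (Qpow P k \<phi> (X u \<omega>))\<^sup>2 + 0) \<partial>M)"
      unfolding Y_def by (simp add: Gen_0 power_mult_distrib power_mult[symmetric] mult.commute[of 2] pow4)
    also have "\<dots> = (\<integral>x. Qpow P 0 (\<lambda>y. 4 ^ k * (Qpow P k \<phi> y)\<^sup>2 + 0) x \<partial>\<nu>)"
      using marg[OF Pb3, of 0] by simp
    also have "\<dots> = 4 ^ k * (\<integral>x. Qpow P 0 (\<lambda>y. (Qpow P k \<phi> y)\<^sup>2) x \<partial>\<nu>)"
      using Qpow_lin[OF Pb2, of 0 "4 ^ k" 0] by simp
    also have "\<dots> \<le> V 0"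
    proof -
      have "0 \<le> (\<integral>x. Qpow P 0 (\<lambda>y. (Qpow P k \<phi> y)\<^sup>2) x \<partial>\<nu>)"
        by (rule Bochner_Integration.integral_nonneg) (simp add: Qpow_0 bmD(1)[OF Pb2])
      then show ?thesis unfolding V_def by simp
    qed
    finally show ?case .
  next
    case (Suc l)
    define m where "m = k - Suc l"
    have km: "k - l = Suc m" using Suc.prems unfolding m_def by simp
    have Pm: "bm (Qpow P m \<phi>) B" by (rule Qpow_bm[OF phi])
    define \<Psi> where "\<Psi> y = 2 ^ m * Qpow P m \<phi> y + 0" for y
    have Psi: "bm \<Psi> (\<bar>2 ^ m\<bar> * B + \<bar>0\<bar>)" unfolding \<Psi>_def by (rule bm_lin[OF Pm])
    have Y1: "Y (Suc l) \<omega> = (\<Sum>u\<in>Gen (Suc l). \<Psi> (X u \<omega>))" for \<omega>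
      unfolding Y_def \<Psi>_def m_def by simp
    have Y0: "Y l \<omega> = (\<Sum>w\<in>Gen l. 2 * Qf \<Psi> (X w \<omega>))" for \<omega>
    proof -
      have "2 ^ (k - l) * Qpow P (k - l) \<phi> y = 2 * Qf \<Psi> y" for y
        unfolding km \<Psi>_def using Qpow_Suc'[OF phi, of m y] Qf_lin[OF Pm, of "2 ^ m" 0 y] by simp
      then show ?thesis unfolding Y_def by simp
    qed
    have "(\<integral>\<omega>. (Y (Suc l) \<omega>)\<^sup>2 \<partial>M) \<le> (\<integral>\<omega>. (Y l \<omega>)\<^sup>2 \<partial>M) + 2 ^ (Suc l + 1) * (\<integral>x. Qpow P (Suc l) (\<lambda>y. (\<Psi> y)\<^sup>2) x \<partial>\<nu>)"
      unfolding Y1 Y0 by (rule var_step[OF Psi])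
    also have "(\<integral>x. Qpow P (Suc l) (\<lambda>y. (\<Psi> y)\<^sup>2) x \<partial>\<nu>) = 4 ^ m * (\<integral>x. Qpow P (Suc l) (\<lambda>y. (Qpow P m \<phi> y)\<^sup>2) x \<partial>\<nu>)"
    proof -
      have b2: "bm (\<lambda>y. (Qpow P m \<phi> y)\<^sup>2) (B\<^sup>2)" by (rule bm_sq[OF Pm])
      have "(\<lambda>y. (\<Psi> y)\<^sup>2) = (\<lambda>y. 4 ^ m * (Qpow P m \<phi> y)\<^sup>2 + 0)"
        unfolding \<Psi>_def by (simp add: fun_eq_iff power_mult_distrib power_mult[symmetric] mult.commute[of 2] pow4)
      then show ?thesis using Qpow_lin[OF b2, of "Suc l" "4 ^ m" 0] by simp
    qed
    also have "(\<integral>\<omega>. (Y l \<omega>)\<^sup>2 \<partial>M) \<le> V l" using Suc by simp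
    finally show ?case unfolding V_def m_def by (simp add: mult.assoc)
  qed
  have "Y k = (\<lambda>\<omega>. \<Sum>u\<in>Gen k. \<phi> (X u \<omega>))"
    unfolding Y_def by (simp add: fun_eq_iff Qpow_0 bmD(1)[OF phi])
  then show ?thesis using main[of k] unfolding V_def by simp
qed

end


lemma nn_affine:
  fixes g :: "real^'d::finite \<Rightarrow> ennreal" and x0 :: "real^'d"
  assumes h: "h > 0" and gm[measurable]: "g \<in> borel_measurable borel"
  shows "(\<integral>\<^sup>+y. g ((1/h) *\<^sub>R (x0 - y)) \<partial>lborel) = ennreal (h ^ CARD('d)) * (\<integral>\<^sup>+t. g t \<partial>lborel)"
proof -
  have c: "-h \<noteq> 0" using h by simp
  have "(\<integral>\<^sup>+y. g ((1/h) *\<^sub>R (x0 - y)) \<partial>lborel)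
      = (\<integral>\<^sup>+y. g ((1/h) *\<^sub>R (x0 - y)) \<partial>density (distr lborel borel (\<lambda>t. x0 + (-h) *\<^sub>R t)) (\<lambda>_. ennreal (\<bar>-h\<bar> ^ DIM(real^'d))))"
    using lborel_affine[OF c, of x0] by simp
  also have "\<dots> = (\<integral>\<^sup>+t. ennreal (h ^ CARD('d)) * g t \<partial>lborel)"
    using h by (simp add: nn_integral_density nn_integral_distr scaleR_diff_right)
  also have "\<dots> = ennreal (h ^ CARD('d)) * (\<integral>\<^sup>+t. g t \<partial>lborel)"
    by (rule nn_integral_cmult) simp
  finally show ?thesis .
qed

lemma int_affine:
  fixes g :: "real^'d::finite \<Rightarrow> real" and x0 :: "real^'d"
  assumes h: "h > 0" and gm[measurable]: "g \<in> borel_measurable borel"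
  shows "(\<integral>y. g ((1/h) *\<^sub>R (x0 - y)) \<partial>lborel) = h ^ CARD('d) * (\<integral>t. g t \<partial>lborel)"
proof -
  have c: "-h \<noteq> 0" using h by simp
  have "(\<integral>y. g ((1/h) *\<^sub>R (x0 - y)) \<partial>lborel)
      = (\<integral>y. g ((1/h) *\<^sub>R (x0 - y)) \<partial>density (distr lborel borel (\<lambda>t. x0 + (-h) *\<^sub>R t)) (\<lambda>_. ennreal (\<bar>-h\<bar> ^ DIM(real^'d))))"
    using lborel_affine[OF c, of x0] by simp
  also have "\<dots> = (\<integral>t. h ^ CARD('d) * g t \<partial>lborel)"
    using h by (simp add: integral_density integral_distr scaleR_diff_right)
  also have "\<dots> = h ^ CARD('d) * (\<integral>t. g t \<partial>lborel)" by simp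
  finally show ?thesis .
qed

lemma powr_cancel_d:
  assumes h: "h > 0"
  shows "(h powr (- (real D / 2)) * h powr (- (real D / 2))) * h ^ D = 1"
proof -
  have "h powr (- (real D / 2)) * h powr (- (real D / 2)) = h powr (- real D)"
    by (simp add: powr_add[symmetric])
  moreover have "h ^ D = h powr real D" using h by (simp add: powr_realpow)
  ultimately show ?thesis using h by (simp add: powr_add[symmetric])
qed

lemma bochner_lim:
  fixes K mu :: "real^'d::finite \<Rightarrow> real" and x0 :: "real^'d" and h :: "nat \<Rightarrow> real"
  assumes Km[measurable]: "K \<in> borel_measurable borel" and Ki: "integrable lborel K"
    and mum[measurable]: "mu \<in> borel_measurable borel" and mub: "\<And>y. \<bar>mu y\<bar> \<le> Cm"
    and cont: "isCont mu x0" and hpos: "\<And>n. h n > 0" and h0: "h \<longlonglongrightarrow> 0"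
  shows "(\<lambda>n. \<integral>y. (h n powr (- (real CARD('d) / 2)) * h n powr (- (real CARD('d) / 2))) * K ((1 / h n) *\<^sub>R (x0 - y)) * mu y \<partial>lborel)
           \<longlonglongrightarrow> (\<integral>t. K t \<partial>lborel) * mu x0"
proof -
  let ?c = "\<lambda>n. h n powr (- (real CARD('d) / 2)) * h n powr (- (real CARD('d) / 2))"
  have eq: "(\<integral>y. ?c n * K ((1 / h n) *\<^sub>R (x0 - y)) * mu y \<partial>lborel) = (\<integral>t. K t * mu (x0 - h n *\<^sub>R t) \<partial>lborel)" for n
  proof -
    have hn: "h n > 0" by (rule hpos)
    define g where "g t = K t * mu (x0 - h n *\<^sub>R t)" for t
    have [measurable]: "g \<in> borel_measurable borel" unfolding g_def by measurable
    have gg: "g ((1 / h n) *\<^sub>R (x0 - y)) = K ((1 / h n) *\<^sub>R (x0 - y)) * mu y" for y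
      unfolding g_def using hn by (simp add: scaleR_diff_right)
    have "(\<integral>y. ?c n * K ((1 / h n) *\<^sub>R (x0 - y)) * mu y \<partial>lborel) = ?c n * (\<integral>y. g ((1 / h n) *\<^sub>R (x0 - y)) \<partial>lborel)"
      unfolding gg by (simp add: mult.assoc)
    also have "\<dots> = ?c n * h n ^ CARD('d) * (\<integral>t. g t \<partial>lborel)"
      using int_affine[OF hn, of g x0] by simp
    also have "\<dots> = (\<integral>t. g t \<partial>lborel)" using powr_cancel_d[OF hn, of "CARD('d)"] by simp
    finally show ?thesis unfolding g_def .
  qed
  have "(\<lambda>n. \<integral>t. K t * mu (x0 - h n *\<^sub>R t) \<partial>lborel) \<longlonglongrightarrow> (\<integral>t. K t * mu x0 \<partial>lborel)"
  proof (rule integral_dominated_convergence[where w="\<lambda>t. \<bar>K t\<bar> * Cm"])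
    show "integrable lborel (\<lambda>t. \<bar>K t\<bar> * Cm)" using Ki by simp
    show "AE t in lborel. (\<lambda>n. K t * mu (x0 - h n *\<^sub>R t)) \<longlonglongrightarrow> K t * mu x0"
    proof (intro AE_I2 tendsto_mult tendsto_const)
      fix t
      have "(\<lambda>n. x0 - h n *\<^sub>R t) \<longlonglongrightarrow> x0 - 0 *\<^sub>R t" by (intro tendsto_intros h0)
      then have "(\<lambda>n. x0 - h n *\<^sub>R t) \<longlonglongrightarrow> x0" by simp
      then show "(\<lambda>n. mu (x0 - h n *\<^sub>R t)) \<longlonglongrightarrow> mu x0" using cont isCont_tendsto_compose by blast
    qed
    show "AE t in lborel. norm (K t * mu (x0 - h n *\<^sub>R t)) \<le> \<bar>K t\<bar> * Cm" for n
      by (intro AE_I2) (simp add: abs_mult mult_left_mono mub)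
  qed simp_all
  then show ?thesis unfolding eq by simp
qed

context kset begin

lemma Qf_bd:
  assumes C0: "\<And>z y. qq z y * ennreal (mu y) \<le> ennreal C0" and C0pos: "0 \<le> C0"
    and gm[measurable]: "g \<in> borel_measurable borel" and gi: "integrable lborel g"
  shows "\<bar>Qf g z\<bar> \<le> C0 * (\<integral>y. \<bar>g y\<bar> \<partial>lborel)"
proof -
  have qm[measurable]: "qq z \<in> borel_measurable borel"
    using qq_meas[of z] by (simp add: measurable_cong_sets[OF sets_muM refl])
  have "(\<integral>\<^sup>+y. ennreal (norm (g y)) \<partial>Qk P z) = (\<integral>\<^sup>+y. qq z y * ennreal \<bar>g y\<bar> \<partial>\<mu>M)"
    by (simp add: Qk_density nn_integral_density)
  also have "\<dots> = (\<integral>\<^sup>+y. ennreal (mu y) * (qq z y * ennreal \<bar>g y\<bar>) \<partial>lborel)"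
    by (simp add: nn_integral_density)
  also have "\<dots> \<le> (\<integral>\<^sup>+y. ennreal C0 * ennreal \<bar>g y\<bar> \<partial>lborel)"
  proof (rule nn_integral_mono)
    fix y
    have "ennreal (mu y) * (qq z y * ennreal \<bar>g y\<bar>) = (qq z y * ennreal (mu y)) * ennreal \<bar>g y\<bar>"
      by (simp add: ac_simps)
    also have "\<dots> \<le> ennreal C0 * ennreal \<bar>g y\<bar>" by (rule mult_right_mono[OF C0]) simp
    finally show "ennreal (mu y) * (qq z y * ennreal \<bar>g y\<bar>) \<le> ennreal C0 * ennreal \<bar>g y\<bar>" .
  qed
  also have "\<dots> = ennreal C0 * (\<integral>\<^sup>+y. ennreal \<bar>g y\<bar> \<partial>lborel)"
    by (rule nn_integral_cmult) simp
  also have "\<dots> = ennreal (C0 * (\<integral>y. \<bar>g y\<bar> \<partial>lborel))"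
    using gi by (simp add: nn_integral_eq_integral ennreal_mult C0pos)
  finally have le: "(\<integral>\<^sup>+y. ennreal (norm (g y)) \<partial>Qk P z) \<le> ennreal (C0 * (\<integral>y. \<bar>g y\<bar> \<partial>lborel))" .
  have rhs0: "0 \<le> C0 * (\<integral>y. \<bar>g y\<bar> \<partial>lborel)" using C0pos by simp
  show ?thesis
  proof (cases "integrable (Qk P z) g")
    case True
    have "ennreal \<bar>Qf g z\<bar> \<le> (\<integral>\<^sup>+y. ennreal (norm (g y)) \<partial>Qk P z)"
      unfolding Qf_def using integral_norm_bound_ennreal[OF True] by simp
    with le have "ennreal \<bar>Qf g z\<bar> \<le> ennreal (C0 * (\<integral>y. \<bar>g y\<bar> \<partial>lborel))" by (meson order.trans)
    then show ?thesis using rhs0 by (simp add: ennreal_le_iff)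
  next
    case False
    then show ?thesis unfolding Qf_def using rhs0 by (simp add: not_integrable_integral_eq)
  qed
qed

end


locale est = bmcset +
  fixes K :: "(real, 'a) vec \<Rightarrow> real" and BK C0 Mc \<alpha> \<gamma> :: real and x0 :: "(real, 'a) vec"
  assumes K_meas[measurable]: "K \<in> borel_measurable borel"
    and K_bd: "\<And>y. \<bar>K y\<bar> \<le> BK"
    and K_int: "integrable lborel K"
    and K_one: "(\<integral>y. K y \<partial>lborel) = 1"
    and C0: "\<And>z y. qq z y * ennreal (mu y) \<le> ennreal C0" and C0pos: "0 \<le> C0"
    and mu_bd: "\<And>y. mu y \<le> C0"
    and cont: "isCont mu x0"
    and geom: "\<And>f n. f \<in> borel_measurable borel \<Longrightarrow> (\<integral>\<^sup>+ x. ennreal ((f x)\<^sup>2) \<partial>\<mu>M) < \<infinity> \<Longrightarrow>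
        (\<integral>\<^sup>+ x. ennreal ((Qpow P n f x - (\<integral> y. f y \<partial>\<mu>M))\<^sup>2) \<partial>\<mu>M)
          \<le> ennreal ((Mc * \<alpha> ^ n)\<^sup>2) * (\<integral>\<^sup>+ x. ennreal ((f x)\<^sup>2) \<partial>\<mu>M)"
    and alpha: "0 < \<alpha>" "\<alpha> < 1"
    and gam: "0 < \<gamma>" "\<gamma> * real CARD('a) < 1"
begin

definition "hh n = 2 powr (- real n * \<gamma>)"
definition "cc n = hh n powr (- (real CARD('a) / 2)) * hh n powr (- (real CARD('a) / 2))"
definition "FF n y = cc n * K ((1 / hh n) *\<^sub>R (x0 - y))"
definition "L1 = (\<integral>y. \<bar>K y\<bar> \<partial>lborel)"
definition "DD = C0 * L1"
definition "mm n = (\<integral>y. FF n y \<partial>\<mu>M)"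
definition "ph n y = FF n y - mm n"
definition "TT j r n = (\<integral>x. Qpow P j (\<lambda>y. (Qpow P r (ph n) y)\<^sup>2) x \<partial>\<nu>)"

lemma hh_pos: "hh n > 0" unfolding hh_def by simp
lemma cc_pos: "cc n > 0" unfolding cc_def using hh_pos[of n] by simp
lemma cc_eq: "cc n = 2 powr (real n * \<gamma> * real CARD('a))"
proof -
  have "cc n = hh n powr (- real CARD('a))" unfolding cc_def by (simp add: powr_add[symmetric])
  also have "\<dots> = 2 powr (real n * \<gamma> * real CARD('a))" unfolding hh_def by (simp add: powr_powr)
  finally show ?thesis .
qed
lemma cc_hh: "cc n * hh n ^ CARD('a) = 1"
  unfolding cc_def using powr_cancel_d[OF hh_pos] by simp

lemma L1_nonneg: "0 \<le> L1" unfolding L1_def by simp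
lemma DD_nonneg: "0 \<le> DD" unfolding DD_def using C0pos L1_nonneg by simp
lemma BK_nonneg: "0 \<le> BK" using K_bd[of 0] by linarith

lemma FF_meas[measurable]: "FF n \<in> borel_measurable borel" unfolding FF_def by measurable

lemma FF_bm: "bm (FF n) (cc n * BK)"
  unfolding bm_def FF_def using cc_pos[of n] K_bd by (auto simp: abs_mult intro!: mult_left_mono)

lemma FF_abs_int: "(\<integral>y. \<bar>FF n y\<bar> \<partial>lborel) = L1"
proof -
  have "(\<integral>y. \<bar>FF n y\<bar> \<partial>lborel) = cc n * (\<integral>y. \<bar>K ((1 / hh n) *\<^sub>R (x0 - y))\<bar> \<partial>lborel)"
    unfolding FF_def using cc_pos[of n] by (simp add: abs_mult)
  also have "\<dots> = cc n * (hh n ^ CARD('a) * L1)"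
    unfolding L1_def by (subst int_affine[OF hh_pos]) simp_all
  finally show ?thesis using cc_hh by (simp add: mult.assoc[symmetric])
qed

lemma FF_integrable: "integrable lborel (FF n)"
proof -
  have "integrable lborel (\<lambda>y. K ((1 / hh n) *\<^sub>R (x0 - y)))"
  proof (subst integrable_iff_bounded, intro conjI)
    show "(\<lambda>y. K ((1 / hh n) *\<^sub>R (x0 - y))) \<in> borel_measurable lborel" by simp
    have "(\<integral>\<^sup>+y. ennreal (norm (K ((1 / hh n) *\<^sub>R (x0 - y)))) \<partial>lborel) = ennreal (hh n ^ CARD('a)) * (\<integral>\<^sup>+t. ennreal (norm (K t)) \<partial>lborel)"
      by (rule nn_affine[OF hh_pos, of "\<lambda>t. ennreal (norm (K t))"]) simp
    also have "\<dots> < \<infinity>" using K_int unfolding integrable_iff_bounded by (simp add: ennreal_mult_less_top)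
    finally show "(\<integral>\<^sup>+y. ennreal (norm (K ((1 / hh n) *\<^sub>R (x0 - y)))) \<partial>lborel) < \<infinity>" .
  qed
  then show ?thesis unfolding FF_def by simp
qed

lemma QFF: "\<bar>Qf (FF n) z\<bar> \<le> DD"
  using Qf_bd[OF C0 C0pos FF_meas[of n] FF_integrable[of n], of z] unfolding DD_def FF_abs_int .

lemma QFF_abs: "\<bar>Qf (\<lambda>y. \<bar>FF n y\<bar>) z\<bar> \<le> DD"
proof -
  have "\<bar>Qf (\<lambda>y. \<bar>FF n y\<bar>) z\<bar> \<le> C0 * (\<integral>y. \<bar>\<bar>FF n y\<bar>\<bar> \<partial>lborel)"
    by (rule Qf_bd[OF C0 C0pos]) (auto intro: FF_integrable)
  then show ?thesis unfolding DD_def by (simp add: FF_abs_int)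
qed

lemma QFF_bm: "bm (Qf (FF n)) DD"
  using Qf_bm[OF FF_bm] QFF unfolding bm_def by blast

lemma mm_eq: "mm n = (\<integral>y. Qf (FF n) y \<partial>\<mu>M)"
  unfolding mm_def by (rule int_Qf_inv[OF FF_bm, symmetric])

lemma mm_bd: "\<bar>mm n\<bar> \<le> DD"
  unfolding mm_eq
  by (rule prob_abs_int_le[OF mu_prob _ bmD(2)[OF QFF_bm]])
     (simp add: measurable_cong_sets[OF sets_muM refl] bmD(1)[OF QFF_bm])

lemma ph_bm: "bm (ph n) (cc n * BK + DD)"
proof -
  have "bm (\<lambda>y. 1 * FF n y + (- mm n)) (\<bar>1\<bar> * (cc n * BK) + \<bar>- mm n\<bar>)" by (rule bm_lin[OF FF_bm])
  then have "bm (ph n) (cc n * BK + \<bar>mm n\<bar>)" unfolding ph_def by simp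
  then show ?thesis using mm_bd unfolding bm_def by (meson add_left_mono order.trans)
qed

lemma mm_lim: "mm \<longlonglongrightarrow> mu x0"
proof -
  have mub: "\<bar>mu y\<bar> \<le> C0" for y using mu_bd[of y] mu_nonneg[of y] by simp
  have h0: "hh \<longlonglongrightarrow> 0"
  proof -
    have "(\<lambda>n. (2 powr (- \<gamma>)) ^ n) \<longlonglongrightarrow> 0"
      by (rule LIMSEQ_power_zero) (use gam(1) in \<open>simp add: powr_minus_divide\<close>)
    moreover have "(2 powr (- \<gamma>)) ^ n = hh n" for n
      unfolding hh_def by (simp add: powr_realpow[symmetric] powr_powr mult.commute)
    ultimately show ?thesis by simp
  qed
  have eq: "mm n = (\<integral>y. (hh n powr (- (real CARD('a) / 2)) * hh n powr (- (real CARD('a) / 2))) * K ((1 / hh n) *\<^sub>R (x0 - y)) * mu y \<partial>lborel)" for n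
    unfolding mm_def FF_def cc_def
    by (subst integral_density) (auto simp: mu_nonneg ac_simps)
  show ?thesis unfolding eq using bochner_lim[OF K_meas K_int mu_meas mub cont hh_pos h0] K_one by simp
qed

end


context est begin

lemma nu_int_bm: "bm g B' \<Longrightarrow> integrable \<nu> g"
  by (rule prob_integrable_bd[OF nu_prob _ bmD(2)]) (auto simp: measurable_cong_sets[OF nu_sets refl] bmD(1))

lemma T_gen: assumes "bm g B'" "\<And>y. g y \<le> C" shows "(\<integral>x. Qpow P j g x \<partial>\<nu>) \<le> C"
proof -
  interpret nu: prob_space \<nu> by (rule nu_prob)
  have "Qpow P j g x \<le> Qpow P j (\<lambda>y. 0 * g y + C) x" for x
    by (rule Qpow_mono[OF assms(1) bm_lin[OF assms(1)]]) (simp add: assms(2))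
  also have "Qpow P j (\<lambda>y. 0 * g y + C) x = C" for x using Qpow_lin[OF assms(1), of j 0 C x] by simp
  finally have le: "Qpow P j g x \<le> C" for x .
  show ?thesis by (rule nu.integral_le_const[OF nu_int_bm[OF Qpow_bm[OF assms(1)]]]) (simp add: le)
qed

lemma geom_real:
  assumes psi: "bm \<psi> B"
  shows "(\<integral>x. (Qpow P n \<psi> x - (\<integral>y. \<psi> y \<partial>\<mu>M))\<^sup>2 \<partial>\<mu>M) \<le> (Mc * \<alpha> ^ n)\<^sup>2 * (\<integral>x. (\<psi> x)\<^sup>2 \<partial>\<mu>M)"
proof -
  have pm[measurable]: "\<psi> \<in> borel_measurable borel" using bmD(1)[OF psi] .
  have qb: "bm (\<lambda>x. 1 * Qpow P n \<psi> x + (- (\<integral>y. \<psi> y \<partial>\<mu>M))) (\<bar>1\<bar> * B + \<bar>- (\<integral>y. \<psi> y \<partial>\<mu>M)\<bar>)"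
    by (rule bm_lin[OF Qpow_bm[OF psi]])
  have qb2: "bm (\<lambda>x. (Qpow P n \<psi> x - (\<integral>y. \<psi> y \<partial>\<mu>M))\<^sup>2) ((\<bar>1\<bar> * B + \<bar>- (\<integral>y. \<psi> y \<partial>\<mu>M)\<bar>)\<^sup>2)"
    using bm_sq[OF qb] by simp
  have pb2: "bm (\<lambda>x. (\<psi> x)\<^sup>2) (B\<^sup>2)" by (rule bm_sq[OF psi])
  have mu_iff: "f \<in> borel_measurable \<mu>M \<longleftrightarrow> f \<in> borel_measurable borel" for f :: "_ \<Rightarrow> real"
    by (simp add: measurable_cong_sets[OF sets_muM refl])
  have i1: "integrable \<mu>M (\<lambda>x. (Qpow P n \<psi> x - (\<integral>y. \<psi> y \<partial>\<mu>M))\<^sup>2)"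
    by (rule prob_integrable_bd[OF mu_prob _ bmD(2)[OF qb2]]) (simp add: mu_iff bmD(1)[OF qb2])
  have i2: "integrable \<mu>M (\<lambda>x. (\<psi> x)\<^sup>2)"
    by (rule prob_integrable_bd[OF mu_prob _ bmD(2)[OF pb2]]) (simp add: mu_iff)
  have e2: "(\<integral>\<^sup>+ x. ennreal ((\<psi> x)\<^sup>2) \<partial>\<mu>M) = ennreal (\<integral>x. (\<psi> x)\<^sup>2 \<partial>\<mu>M)"
    by (rule nn_integral_eq_integral[OF i2]) simp
  have "ennreal (\<integral>x. (Qpow P n \<psi> x - (\<integral>y. \<psi> y \<partial>\<mu>M))\<^sup>2 \<partial>\<mu>M)
      = (\<integral>\<^sup>+ x. ennreal ((Qpow P n \<psi> x - (\<integral> y. \<psi> y \<partial>\<mu>M))\<^sup>2) \<partial>\<mu>M)"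
    by (rule nn_integral_eq_integral[OF i1, symmetric]) simp
  also have "\<dots> \<le> ennreal ((Mc * \<alpha> ^ n)\<^sup>2) * (\<integral>\<^sup>+ x. ennreal ((\<psi> x)\<^sup>2) \<partial>\<mu>M)"
    by (rule geom) (simp_all add: e2)
  also have "\<dots> = ennreal ((Mc * \<alpha> ^ n)\<^sup>2 * (\<integral>x. (\<psi> x)\<^sup>2 \<partial>\<mu>M))"
    by (simp add: e2 ennreal_mult)
  finally show ?thesis
    by (subst (asm) ennreal_le_iff) (auto intro!: mult_nonneg_nonneg Bochner_Integration.integral_nonneg)
qed

lemma Qf_ph: "Qf (ph n) z = Qf (FF n) z - mm n"
proof -
  have "ph n = (\<lambda>y. 1 * FF n y + (- mm n))" unfolding ph_def by (simp add: fun_eq_iff)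
  then show ?thesis using Qf_lin[OF FF_bm[of n], of 1 "- mm n" z] by simp
qed

lemma Qf_ph_bm: "bm (Qf (ph n)) (2 * DD)"
proof -
  have "\<bar>Qf (ph n) z\<bar> \<le> 2 * DD" for z using QFF[of n z] mm_bd[of n] unfolding Qf_ph by linarith
  then show ?thesis using Qf_bm[OF ph_bm] unfolding bm_def by blast
qed

lemma T_a: assumes "1 \<le> r" shows "TT j r n \<le> (2 * DD)\<^sup>2"
proof -
  have eq: "Qpow P r (ph n) = Qpow P (r - 1) (Qf (ph n))"
    using Qpow_Suc[OF ph_bm, of "r - 1"] assms by (simp add: fun_eq_iff)
  have b: "bm (Qpow P r (ph n)) (2 * DD)" unfolding eq by (rule Qpow_bm[OF Qf_ph_bm])
  show ?thesis unfolding TT_def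
    by (rule T_gen[OF bm_sq[OF b]]) (rule sq_le_bd[OF bmD(2)[OF b]])
qed

lemma T_b: assumes "k0 + 1 \<le> r"
  shows "TT j r n \<le> max B\<nu> 0 * ((Mc * \<alpha> ^ (r - k0 - 1))\<^sup>2 * DD\<^sup>2)"
proof -
  define s where "s = r - k0"
  have rs: "r = k0 + s" "1 \<le> s" using assms unfolding s_def by auto
  have phb: "bm (ph n) (cc n * BK + DD)" by (rule ph_bm)
  have sb: "bm (Qpow P s (ph n)) (cc n * BK + DD)" by (rule Qpow_bm[OF phb])
  have sb2: "bm (\<lambda>y. (Qpow P s (ph n) y)\<^sup>2) ((cc n * BK + DD)\<^sup>2)" by (rule bm_sq[OF sb])
  have rb2: "bm (\<lambda>y. (Qpow P r (ph n) y)\<^sup>2) ((cc n * BK + DD)\<^sup>2)" by (rule bm_sq[OF Qpow_bm[OF phb]])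
  have jb: "(Qpow P r (ph n) y)\<^sup>2 \<le> Qpow P k0 (\<lambda>y. (Qpow P s (ph n) y)\<^sup>2) y" for y
  proof -
    have "Qpow P r (ph n) y = Qpow P k0 (Qpow P s (ph n)) y" unfolding rs(1) by (rule Qpow_add[OF phb])
    then show ?thesis using Qpow_jensen[OF sb, of k0 y] by simp
  qed
  have step1: "Qpow P j (\<lambda>y. (Qpow P r (ph n) y)\<^sup>2) x \<le> Qpow P (j + k0) (\<lambda>y. (Qpow P s (ph n) y)\<^sup>2) x" for x
  proof -
    have "Qpow P j (\<lambda>y. (Qpow P r (ph n) y)\<^sup>2) x \<le> Qpow P j (Qpow P k0 (\<lambda>y. (Qpow P s (ph n) y)\<^sup>2)) x"
      by (rule Qpow_mono[OF rb2 Qpow_bm[OF sb2] jb])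
    also have "\<dots> = Qpow P (j + k0) (\<lambda>y. (Qpow P s (ph n) y)\<^sup>2) x" by (rule Qpow_add[OF sb2, symmetric])
    finally show ?thesis .
  qed
  have "TT j r n \<le> (\<integral>x. Qpow P (j + k0) (\<lambda>y. (Qpow P s (ph n) y)\<^sup>2) x \<partial>\<nu>)"
    unfolding TT_def
    by (rule integral_mono[OF nu_int_bm[OF Qpow_bm[OF rb2]] nu_int_bm[OF Qpow_bm[OF sb2]] step1])
  also have "\<dots> \<le> B\<nu> * (\<integral>x. (Qpow P s (ph n) x)\<^sup>2 \<partial>\<mu>M)"
    by (rule nu_bound[OF sb2]) simp_all
  also have "\<dots> \<le> max B\<nu> 0 * (\<integral>x. (Qpow P s (ph n) x)\<^sup>2 \<partial>\<mu>M)"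
    by (rule mult_right_mono) (auto intro: Bochner_Integration.integral_nonneg)
  also have "(\<integral>x. (Qpow P s (ph n) x)\<^sup>2 \<partial>\<mu>M) \<le> (Mc * \<alpha> ^ (r - k0 - 1))\<^sup>2 * DD\<^sup>2"
  proof -
    have QFb: "bm (Qf (FF n)) DD" by (rule QFF_bm)
    have "Qpow P s (ph n) x = Qpow P (s - 1) (Qf (FF n)) x - (\<integral>y. Qf (FF n) y \<partial>\<mu>M)" for x
    proof -
      have "Qpow P s (ph n) x = Qpow P (s - 1) (Qf (ph n)) x"
        using Qpow_Suc[OF phb, of "s - 1" x] rs(2) by simp
      also have "Qf (ph n) = (\<lambda>y. 1 * Qf (FF n) y + (- mm n))" by (simp add: fun_eq_iff Qf_ph)
      also have "Qpow P (s - 1) (\<lambda>y. 1 * Qf (FF n) y + (- mm n)) x = Qpow P (s - 1) (Qf (FF n)) x - mm n"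
        using Qpow_lin[OF QFb, of "s - 1" 1 "- mm n" x] by simp
      finally show ?thesis unfolding mm_eq .
    qed
    then have "(\<integral>x. (Qpow P s (ph n) x)\<^sup>2 \<partial>\<mu>M) = (\<integral>x. (Qpow P (s - 1) (Qf (FF n)) x - (\<integral>y. Qf (FF n) y \<partial>\<mu>M))\<^sup>2 \<partial>\<mu>M)"
      by simp
    also have "\<dots> \<le> (Mc * \<alpha> ^ (s - 1))\<^sup>2 * (\<integral>x. (Qf (FF n) x)\<^sup>2 \<partial>\<mu>M)" by (rule geom_real[OF QFb])
    also have "\<dots> \<le> (Mc * \<alpha> ^ (s - 1))\<^sup>2 * DD\<^sup>2"
    proof (rule mult_left_mono)
      interpret mp: prob_space \<mu>M by (rule mu_prob)
      have b2: "bm (\<lambda>x. (Qf (FF n) x)\<^sup>2) (DD\<^sup>2)" by (rule bm_sq[OF QFb])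
      show "(\<integral>x. (Qf (FF n) x)\<^sup>2 \<partial>\<mu>M) \<le> DD\<^sup>2"
        by (rule mp.integral_le_const)
           (auto intro!: prob_integrable_bd[OF mu_prob _ bmD(2)[OF b2]] simp: measurable_cong_sets[OF sets_muM refl] bmD(1)[OF b2] sq_le_bd[OF bmD(2)[OF QFb]])
    qed simp
    finally show ?thesis unfolding s_def by simp
  qed
  then have "max B\<nu> 0 * (\<integral>x. (Qpow P s (ph n) x)\<^sup>2 \<partial>\<mu>M) \<le> max B\<nu> 0 * ((Mc * \<alpha> ^ (r - k0 - 1))\<^sup>2 * DD\<^sup>2)"
    by (rule mult_left_mono) simp
  finally show ?thesis .
qed

end


context kset begin
lemma Qf_mono: "bm f B \<Longrightarrow> bm g B' \<Longrightarrow> (\<And>y. f y \<le> g y) \<Longrightarrow> Qf f x \<le> Qf g x"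
  using Qpow_mono[of f B g B' 1 x] Qpow_1[of f B x] Qpow_1[of g B' x] by simp
end

lemma sq_diff_le: "((a::real) - b)\<^sup>2 \<le> 2 * a\<^sup>2 + 2 * b\<^sup>2"
proof -
  have "2 * a\<^sup>2 + 2 * b\<^sup>2 - (a - b)\<^sup>2 = (a + b)\<^sup>2" by (simp add: power2_eq_square algebra_simps)
  moreover have "0 \<le> (a + b)\<^sup>2" by simp
  ultimately show ?thesis by linarith
qed

lemma le_mul1: "0 \<le> (x::real) \<Longrightarrow> 1 \<le> y \<Longrightarrow> x \<le> x * y"
  by (metis mult.right_neutral mult_left_mono)

context est begin

lemma T_c: assumes "1 \<le> j" shows "TT j 0 n \<le> 2 * (cc n * BK) * DD + 2 * DD\<^sup>2"
proof -
  have phb: "bm (ph n) (cc n * BK + DD)" by (rule ph_bm)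
  have p2: "bm (\<lambda>y. (ph n y)\<^sup>2) ((cc n * BK + DD)\<^sup>2)" by (rule bm_sq[OF phb])
  have q0: "Qpow P 0 (ph n) = ph n" by (simp add: fun_eq_iff Qpow_0 bmD(1)[OF phb])
  have eq: "Qpow P j (\<lambda>y. (ph n y)\<^sup>2) x = Qpow P (j - 1) (Qf (\<lambda>y. (ph n y)\<^sup>2)) x" for x
    using Qpow_Suc[OF p2, of "j - 1" x] assms by simp
  have Fabs: "bm (\<lambda>y. \<bar>FF n y\<bar>) (cc n * BK)" using FF_bm[of n] unfolding bm_def by auto
  have Fl: "bm (\<lambda>y. (2 * (cc n * BK)) * \<bar>FF n y\<bar> + 2 * DD\<^sup>2) (\<bar>2 * (cc n * BK)\<bar> * (cc n * BK) + \<bar>2 * DD\<^sup>2\<bar>)"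
    by (rule bm_lin[OF Fabs])
  have ccBK: "0 \<le> cc n * BK" using cc_pos[of n] BK_nonneg by simp
  have pt: "(ph n y)\<^sup>2 \<le> (2 * (cc n * BK)) * \<bar>FF n y\<bar> + 2 * DD\<^sup>2" for y
  proof -
    have "(ph n y)\<^sup>2 \<le> 2 * (FF n y)\<^sup>2 + 2 * (mm n)\<^sup>2"
      unfolding ph_def by (rule sq_diff_le)
    also have "(FF n y)\<^sup>2 \<le> (cc n * BK) * \<bar>FF n y\<bar>"
    proof -
      have "(FF n y)\<^sup>2 = \<bar>FF n y\<bar> * \<bar>FF n y\<bar>" by (simp add: power2_eq_square abs_mult_self_eq)
      also have "\<dots> \<le> (cc n * BK) * \<bar>FF n y\<bar>" by (rule mult_right_mono[OF bmD(2)[OF FF_bm]]) simp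
      finally show ?thesis .
    qed
    also have "(mm n)\<^sup>2 \<le> DD\<^sup>2" by (rule sq_le_bd[OF mm_bd])
    finally show ?thesis by simp
  qed
  have Qb: "Qf (\<lambda>y. (ph n y)\<^sup>2) z \<le> 2 * (cc n * BK) * DD + 2 * DD\<^sup>2" for z
  proof -
    have "Qf (\<lambda>y. (ph n y)\<^sup>2) z \<le> Qf (\<lambda>y. (2 * (cc n * BK)) * \<bar>FF n y\<bar> + 2 * DD\<^sup>2) z"
      by (rule Qf_mono[OF p2 Fl pt])
    also have "\<dots> = (2 * (cc n * BK)) * Qf (\<lambda>y. \<bar>FF n y\<bar>) z + 2 * DD\<^sup>2" by (rule Qf_lin[OF Fabs])
    also have "\<dots> \<le> 2 * (cc n * BK) * DD + 2 * DD\<^sup>2"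
      using QFF_abs[of n z] ccBK by (simp add: mult_left_mono abs_le_iff)
    finally show ?thesis .
  qed
  show ?thesis unfolding TT_def eq q0 by (rule T_gen[OF Qf_bm[OF p2] Qb])
qed

lemma T_d: "TT 0 0 n \<le> (cc n * BK + DD)\<^sup>2"
proof -
  have phb: "bm (ph n) (cc n * BK + DD)" by (rule ph_bm)
  have q0: "Qpow P 0 (ph n) = ph n" by (simp add: fun_eq_iff Qpow_0 bmD(1)[OF phb])
  show ?thesis unfolding TT_def q0 by (rule T_gen[OF bm_sq[OF phb]]) (rule sq_le_bd[OF bmD(2)[OF phb]])
qed

definition "\<beta> = \<alpha>\<^sup>2"
definition "AA = ((2 * DD)\<^sup>2 + max B\<nu> 0 * Mc\<^sup>2 * DD\<^sup>2) / \<beta> ^ (k0 + 1)"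

lemma beta: "0 < \<beta>" "\<beta> < 1"
proof -
  show "0 < \<beta>" unfolding \<beta>_def using alpha(1) by simp
  have "\<alpha> ^ 2 < 1 ^ 2" by (rule power_strict_mono) (use alpha in auto)
  then show "\<beta> < 1" unfolding \<beta>_def by simp
qed

lemma AA_eq: "AA * \<beta> ^ r = ((2 * DD)\<^sup>2 + max B\<nu> 0 * Mc\<^sup>2 * DD\<^sup>2) * (\<beta> ^ r / \<beta> ^ (k0 + 1))"
  unfolding AA_def by simp

lemma T_r: assumes "1 \<le> r" shows "TT j r n \<le> AA * \<beta> ^ r"
proof (cases "r \<le> k0")
  case True
  have "TT j r n \<le> (2 * DD)\<^sup>2" by (rule T_a[OF assms])
  also have "\<dots> \<le> (2 * DD)\<^sup>2 * (\<beta> ^ r / \<beta> ^ (k0 + 1))"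
  proof -
    have "\<beta> ^ (k0 + 1) \<le> \<beta> ^ r" using True beta by (intro power_decreasing) auto
    then have "1 \<le> \<beta> ^ r / \<beta> ^ (k0 + 1)" using beta by simp
    then show ?thesis by (rule le_mul1[rotated]) simp
  qed
  also have "\<dots> \<le> AA * \<beta> ^ r"
    unfolding AA_eq by (rule mult_right_mono) (use beta in auto)
  finally show ?thesis .
next
  case False
  then have r: "k0 + 1 \<le> r" by simp
  have "TT j r n \<le> max B\<nu> 0 * ((Mc * \<alpha> ^ (r - k0 - 1))\<^sup>2 * DD\<^sup>2)" by (rule T_b[OF r])
  also have "(Mc * \<alpha> ^ (r - k0 - 1))\<^sup>2 = Mc\<^sup>2 * (\<beta> ^ r / \<beta> ^ (k0 + 1))"
  proof -
    have "(\<alpha> ^ (r - k0 - 1))\<^sup>2 = \<beta> ^ (r - k0 - 1)" unfolding \<beta>_def by (simp add: power_mult[symmetric] power_mult_distrib mult.commute)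
    also have "\<dots> = \<beta> ^ r / \<beta> ^ (k0 + 1)" using r beta by (simp add: power_diff)
    finally show ?thesis by (simp add: power_mult_distrib)
  qed
  also have "max B\<nu> 0 * (Mc\<^sup>2 * (\<beta> ^ r / \<beta> ^ (k0 + 1)) * DD\<^sup>2) \<le> AA * \<beta> ^ r"
  proof -
    have "max B\<nu> 0 * (Mc\<^sup>2 * (\<beta> ^ r / \<beta> ^ (k0 + 1)) * DD\<^sup>2) = (max B\<nu> 0 * Mc\<^sup>2 * DD\<^sup>2) * (\<beta> ^ r / \<beta> ^ (k0 + 1))"
      by (simp only: ac_simps)
    also have "\<dots> \<le> AA * \<beta> ^ r"
      unfolding AA_eq by (rule mult_right_mono) (use beta in auto)
    finally show ?thesis .
  qed
  finally show ?thesis .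
qed

end


context est begin

definition "\<rho> = max (1/2) \<beta>"
lemma rho: "0 < \<rho>" "\<rho> < 1" "1/2 \<le> \<rho>" "\<beta> \<le> \<rho>" unfolding \<rho>_def using beta by auto

lemma AA_nonneg: "0 \<le> AA" unfolding AA_def using beta by (auto intro!: divide_nonneg_pos add_nonneg_nonneg mult_nonneg_nonneg)

definition "Sk k n \<omega> = (\<Sum>u\<in>Gen k. ph n (X u \<omega>))"

lemma Sk_meas[measurable]: "Sk k n \<in> borel_measurable M"
  unfolding Sk_def using Xbm_meas[OF ph_bm] by simp
lemma Sk_bdd: "bdd (Sk k n)" unfolding Sk_def by (intro bdd_sum bdd_X[OF ph_bm])

lemma term_bd: assumes "j \<le> k"
  shows "2 ^ j * 4 ^ (k - j) * \<beta> ^ (k - j) \<le> 4 ^ k * \<rho> ^ k"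
proof -
  have "2 ^ j * 4 ^ (k - j) * \<beta> ^ (k - j) = 4 ^ k * ((1/2) ^ j * \<beta> ^ (k - j))"
  proof -
    have "(4::real) ^ k = 4 ^ j * 4 ^ (k - j)" using assms by (simp add: power_add[symmetric])
    moreover have "(4::real) ^ j = 2 ^ j * 2 ^ j" by (simp add: power_mult_distrib[symmetric])
    ultimately show ?thesis by (simp add: power_one_over field_simps)
  qed
  also have "(1/2) ^ j * \<beta> ^ (k - j) \<le> \<rho> ^ j * \<rho> ^ (k - j)"
    by (intro mult_mono power_mono) (use rho beta in auto)
  also have "\<rho> ^ j * \<rho> ^ (k - j) = \<rho> ^ k" using assms by (simp add: power_add[symmetric])
  finally show ?thesis by simp
qed

lemma ES_bd: assumes "1 \<le> k"
  shows "(\<integral>\<omega>. (Sk k n \<omega>)\<^sup>2 \<partial>M) \<le> 2 ^ (k + 1) * (2 * (cc n * BK) * DD + 2 * DD\<^sup>2) + 2 * AA * k * 4 ^ k * \<rho> ^ k"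
proof -
  have "(\<integral>\<omega>. (Sk k n \<omega>)\<^sup>2 \<partial>M) \<le> (\<Sum>j\<le>k. 2 ^ (j + 1) * 4 ^ (k - j) * TT j (k - j) n)"
    unfolding Sk_def TT_def by (rule var_bound[OF ph_bm])
  also have "\<dots> = (\<Sum>j<k. 2 ^ (j + 1) * 4 ^ (k - j) * TT j (k - j) n) + 2 ^ (k + 1) * TT k 0 n"
    by (simp add: lessThan_Suc_atMost[symmetric])
  also have "\<dots> \<le> (\<Sum>j<k. 2 * AA * (4 ^ k * \<rho> ^ k)) + 2 ^ (k + 1) * (2 * (cc n * BK) * DD + 2 * DD\<^sup>2)"
  proof (rule add_mono[OF sum_mono])
    fix j assume "j \<in> {..<k}"
    then have j: "j < k" by simp
    have "2 ^ (j + 1) * 4 ^ (k - j) * TT j (k - j) n \<le> 2 ^ (j + 1) * 4 ^ (k - j) * (AA * \<beta> ^ (k - j))"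
      by (rule mult_left_mono[OF T_r]) (use j in auto)
    also have "\<dots> = 2 * AA * (2 ^ j * 4 ^ (k - j) * \<beta> ^ (k - j))" by (simp add: ac_simps)
    also have "\<dots> \<le> 2 * AA * (4 ^ k * \<rho> ^ k)"
      by (rule mult_left_mono[OF term_bd]) (use j AA_nonneg in auto)
    finally show "2 ^ (j + 1) * 4 ^ (k - j) * TT j (k - j) n \<le> 2 * AA * (4 ^ k * \<rho> ^ k)" .
  next
    show "2 ^ (k + 1) * TT k 0 n \<le> 2 ^ (k + 1) * (2 * (cc n * BK) * DD + 2 * DD\<^sup>2)"
      by (rule mult_left_mono[OF T_c[OF assms]]) simp
  qed
  also have "\<dots> = 2 ^ (k + 1) * (2 * (cc n * BK) * DD + 2 * DD\<^sup>2) + 2 * AA * k * 4 ^ k * \<rho> ^ k"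
    by simp
  finally show ?thesis .
qed

lemma ES0_bd: "(\<integral>\<omega>. (Sk 0 n \<omega>)\<^sup>2 \<partial>M) \<le> 2 * (cc n * BK + DD)\<^sup>2"
proof -
  have "(\<integral>\<omega>. (Sk 0 n \<omega>)\<^sup>2 \<partial>M) \<le> (\<Sum>j\<le>0. 2 ^ (j + 1) * 4 ^ (0 - j) * TT j (0 - j) n)"
    unfolding Sk_def TT_def by (rule var_bound[OF ph_bm])
  also have "\<dots> = 2 * TT 0 0 n" by simp
  also have "\<dots> \<le> 2 * (cc n * BK + DD)\<^sup>2" using T_d by simp
  finally show ?thesis .
qed

end


lemma pow2sq: "((2::real) ^ n)\<^sup>2 = 4 ^ n"
proof -
  have "((2::real) ^ n)\<^sup>2 = (2 ^ 2) ^ n" by (simp only: power_mult[symmetric] mult.commute)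
  then show ?thesis by simp
qed

lemma bdd_divide: "bdd F \<Longrightarrow> bdd (\<lambda>\<omega>. F \<omega> / c)"
  using bdd_mult[of F "\<lambda>_. 1 / c"] by simp

lemma sq_sum_le: "((a::real) + b)\<^sup>2 \<le> 2 * a\<^sup>2 + 2 * b\<^sup>2"
  using sq_diff_le[of a "-b"] by simp

lemma cs_weighted:
  fixes S :: "nat \<Rightarrow> real"
  shows "(\<Sum>k\<in>{1..n}. S k)\<^sup>2 \<le> 2 ^ (n + 1) * (\<Sum>k\<in>{1..n}. (S k)\<^sup>2 / 2 ^ k)"
proof -
  have "(\<Sum>k\<in>{1..n}. S k)\<^sup>2 = (\<Sum>k\<in>{1..n}. sqrt (2 ^ k) * (S k / sqrt (2 ^ k)))\<^sup>2"
    by simp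
  also have "\<dots> \<le> (\<Sum>k\<in>{1..n}. (sqrt (2 ^ k))\<^sup>2) * (\<Sum>k\<in>{1..n}. (S k / sqrt (2 ^ k))\<^sup>2)"
    by (rule Cauchy_Schwarz_ineq_sum)
  also have "\<dots> = (\<Sum>k\<in>{1..n}. 2 ^ k) * (\<Sum>k\<in>{1..n}. (S k)\<^sup>2 / 2 ^ k)"
    by (simp add: power_divide)
  also have "\<dots> \<le> 2 ^ (n + 1) * (\<Sum>k\<in>{1..n}. (S k)\<^sup>2 / 2 ^ k)"
  proof (rule mult_right_mono)
    have "(\<Sum>k\<in>{1..n}. (2::real) ^ k) \<le> (\<Sum>k\<le>n. 2 ^ k)" by (rule sum_mono2) auto
    also have "(\<Sum>k\<le>n. (2::real) ^ k) = 2 ^ (n + 1) - 1" by (induction n) auto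
    finally show "(\<Sum>k\<in>{1..n}. (2::real) ^ k) \<le> 2 ^ (n + 1)" by simp
  qed (auto intro: sum_nonneg)
  finally show ?thesis .
qed

context est begin

definition "XX n = 2 * (cc n * BK) * DD + 2 * DD\<^sup>2"

lemma XX_nonneg: "0 \<le> XX n"
  unfolding XX_def using cc_pos[of n] BK_nonneg DD_nonneg by simp

lemma EG_bd: assumes "1 \<le> n"
  shows "(\<integral>\<omega>. (Sk n n \<omega> / 2 ^ n)\<^sup>2 \<partial>M) \<le> 2 * XX n / 2 ^ n + 2 * AA * n * \<rho> ^ n"
proof -
  have "(\<integral>\<omega>. (Sk n n \<omega> / 2 ^ n)\<^sup>2 \<partial>M) = (\<integral>\<omega>. (Sk n n \<omega>)\<^sup>2 \<partial>M) / 4 ^ n"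
    by (simp add: power_divide pow2sq)
  also have "\<dots> \<le> (2 ^ (n + 1) * XX n + 2 * AA * n * 4 ^ n * \<rho> ^ n) / 4 ^ n"
    unfolding XX_def by (rule divide_right_mono[OF ES_bd[OF assms]]) simp
  also have "\<dots> = 2 * XX n / 2 ^ n + 2 * AA * n * \<rho> ^ n"
  proof -
    have "(4::real) ^ n = 2 ^ n * 2 ^ n" by (simp add: power_mult_distrib[symmetric])
    then show ?thesis by (simp add: field_simps)
  qed
  finally show ?thesis .
qed

definition "ST n \<omega> = (\<Sum>k\<le>n. Sk k n \<omega>)"

lemma EST_bd:
  shows "(\<integral>\<omega>. (ST n \<omega>)\<^sup>2 \<partial>M) \<le> 4 * (cc n * BK + DD)\<^sup>2 + 2 ^ (n + 2) * (n * (2 * XX n + 2 * AA * n * (2 * \<rho>) ^ n))"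
proof -
  have split: "ST n \<omega> = Sk 0 n \<omega> + (\<Sum>k\<in>{1..n}. Sk k n \<omega>)" for \<omega>
  proof -
    have "{..n} = insert 0 {1..n}" by auto
    then show ?thesis unfolding ST_def by simp
  qed
  have pw: "(ST n \<omega>)\<^sup>2 \<le> 2 * (Sk 0 n \<omega>)\<^sup>2 + 2 * (2 ^ (n + 1) * (\<Sum>k\<in>{1..n}. (Sk k n \<omega>)\<^sup>2 / 2 ^ k))" for \<omega>
    unfolding split using sq_sum_le[of "Sk 0 n \<omega>" "\<Sum>k\<in>{1..n}. Sk k n \<omega>"]
      cs_weighted[of "\<lambda>k. Sk k n \<omega>" n] by linarith
  have iS: "integrable M (\<lambda>\<omega>. (Sk k n \<omega>)\<^sup>2)" for k by (intro intM bdd_power Sk_bdd) simp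
  have "(\<integral>\<omega>. (ST n \<omega>)\<^sup>2 \<partial>M) \<le> (\<integral>\<omega>. 2 * (Sk 0 n \<omega>)\<^sup>2 + 2 * (2 ^ (n + 1) * (\<Sum>k\<in>{1..n}. (Sk k n \<omega>)\<^sup>2 / 2 ^ k)) \<partial>M)"
  proof (rule integral_mono[OF _ _ pw])
    show "integrable M (\<lambda>\<omega>. (ST n \<omega>)\<^sup>2)" unfolding ST_def by (intro intM bdd_power bdd_sum Sk_bdd) simp
    show "integrable M (\<lambda>\<omega>. 2 * (Sk 0 n \<omega>)\<^sup>2 + 2 * (2 ^ (n + 1) * (\<Sum>k\<in>{1..n}. (Sk k n \<omega>)\<^sup>2 / 2 ^ k)))"
      by (intro intM bdd_add bdd_mult bdd_const bdd_power bdd_sum bdd_divide Sk_bdd) simp_all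
  qed
  also have "\<dots> = 2 * (\<integral>\<omega>. (Sk 0 n \<omega>)\<^sup>2 \<partial>M) + 2 * (2 ^ (n + 1) * (\<Sum>k\<in>{1..n}. (\<integral>\<omega>. (Sk k n \<omega>)\<^sup>2 \<partial>M) / 2 ^ k))"
    using iS by (simp add: Bochner_Integration.integral_sum)
  also have "\<dots> \<le> 2 * (2 * (cc n * BK + DD)\<^sup>2) + 2 * (2 ^ (n + 1) * (\<Sum>k\<in>{1..n}. 2 * XX n + 2 * AA * n * (2 * \<rho>) ^ n))"
  proof (intro add_mono mult_left_mono sum_mono ES0_bd)
    fix k assume "k \<in> {1..n}"
    then have k: "1 \<le> k" "k \<le> n" by auto
    have "(\<integral>\<omega>. (Sk k n \<omega>)\<^sup>2 \<partial>M) / 2 ^ k \<le> (2 ^ (k + 1) * XX n + 2 * AA * k * 4 ^ k * \<rho> ^ k) / 2 ^ k"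
      unfolding XX_def by (rule divide_right_mono[OF ES_bd[OF k(1)]]) simp
    also have "\<dots> = 2 * XX n + 2 * AA * k * (2 * \<rho>) ^ k"
    proof -
      have "(4::real) ^ k = 2 ^ k * 2 ^ k" by (simp add: power_mult_distrib[symmetric])
      then show ?thesis by (simp add: field_simps power_mult_distrib)
    qed
    also have "\<dots> \<le> 2 * XX n + 2 * AA * n * (2 * \<rho>) ^ n"
    proof -
      have "1 \<le> 2 * \<rho>" using rho by simp
      then have "(2 * \<rho>) ^ k \<le> (2 * \<rho>) ^ n" using k by (intro power_increasing) auto
      moreover have "real k \<le> real n" using k by simp
      ultimately have "real k * (2 * \<rho>) ^ k \<le> real n * (2 * \<rho>) ^ n"
        by (intro mult_mono) (use rho in auto)
      then show ?thesis using AA_nonneg by (simp add: mult.assoc mult_left_mono)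
    qed
    finally show "(\<integral>\<omega>. (Sk k n \<omega>)\<^sup>2 \<partial>M) / 2 ^ k \<le> 2 * XX n + 2 * AA * n * (2 * \<rho>) ^ n" .
  qed simp_all
  also have "\<dots> = 4 * (cc n * BK + DD)\<^sup>2 + 2 ^ (n + 2) * (n * (2 * XX n + 2 * AA * n * (2 * \<rho>) ^ n))"
    by simp
  finally show ?thesis .
qed

lemma ET_bd:
  shows "(\<integral>\<omega>. (ST n \<omega> / (2 ^ (n + 1) - 1))\<^sup>2 \<partial>M)
     \<le> 4 * ((cc n * BK + DD) / 2 ^ n)\<^sup>2 + 8 * real n * XX n / 2 ^ n + 8 * AA * (real n)\<^sup>2 * \<rho> ^ n"
proof -
  have Tpos: "(2::real) ^ n \<le> 2 ^ (n + 1) - 1"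
  proof -
    have "(1::real) \<le> 2 ^ n" by simp
    then show ?thesis by simp
  qed
  have T0: "0 < (2::real) ^ n" by simp
  have "(\<integral>\<omega>. (ST n \<omega> / (2 ^ (n + 1) - 1))\<^sup>2 \<partial>M) = (\<integral>\<omega>. (ST n \<omega>)\<^sup>2 \<partial>M) / (2 ^ (n + 1) - 1)\<^sup>2"
    by (simp add: power_divide)
  also have "\<dots> \<le> (\<integral>\<omega>. (ST n \<omega>)\<^sup>2 \<partial>M) / (2 ^ n)\<^sup>2"
  proof (rule divide_left_mono)
    show "0 \<le> (\<integral>\<omega>. (ST n \<omega>)\<^sup>2 \<partial>M)" by (rule Bochner_Integration.integral_nonneg) simp
    show "(2 ^ n)\<^sup>2 \<le> ((2::real) ^ (n + 1) - 1)\<^sup>2" by (rule power_mono[OF Tpos]) simp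
    have "0 < (2::real) ^ (n + 1) - 1" using Tpos T0 by linarith
    then show "0 < ((2::real) ^ (n + 1) - 1)\<^sup>2 * (2 ^ n)\<^sup>2" using T0 by simp
  qed
  also have "\<dots> \<le> (4 * (cc n * BK + DD)\<^sup>2 + 2 ^ (n + 2) * (n * (2 * XX n + 2 * AA * n * (2 * \<rho>) ^ n))) / (2 ^ n)\<^sup>2"
    by (rule divide_right_mono[OF EST_bd]) simp
  also have "\<dots> = 4 * ((cc n * BK + DD) / 2 ^ n)\<^sup>2 + 8 * real n * XX n / 2 ^ n + 8 * AA * (real n)\<^sup>2 * \<rho> ^ n"
    by (simp add: field_simps power_mult_distrib power2_eq_square)
  finally show ?thesis .
qed

end


lemma n_pow_lim: "0 \<le> (x::real) \<Longrightarrow> x < 1 \<Longrightarrow> (\<lambda>n. real n * x ^ n) \<longlonglongrightarrow> 0"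
  using powser_times_n_limit_0[of x] by simp

lemma n2_pow_lim: assumes "0 \<le> (x::real)" "x < 1" shows "(\<lambda>n. (real n)\<^sup>2 * x ^ n) \<longlonglongrightarrow> 0"
proof -
  have s: "0 \<le> sqrt x" "sqrt x < 1" using assms by auto
  have "(\<lambda>n. (real n * sqrt x ^ n)\<^sup>2) \<longlonglongrightarrow> 0\<^sup>2" by (intro tendsto_power n_pow_lim s)
  moreover have "(real n * sqrt x ^ n)\<^sup>2 = (real n)\<^sup>2 * x ^ n" for n
    using assms by (simp add: power_mult_distrib power_mult[symmetric] mult.commute[of n 2] power_mult real_sqrt_pow2)
  ultimately show ?thesis by simp
qed

context est begin

lemma cc_ratio: "cc n / 2 ^ n = (2 powr (\<gamma> * real CARD('a) - 1)) ^ n"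
proof -
  have "cc n / 2 ^ n = 2 powr (real n * \<gamma> * real CARD('a)) / 2 powr real n"
    by (simp add: cc_eq powr_realpow)
  also have "\<dots> = 2 powr (real n * (\<gamma> * real CARD('a) - 1))" by (simp add: powr_diff[symmetric] algebra_simps)
  also have "\<dots> = (2 powr (\<gamma> * real CARD('a) - 1)) ^ n"
    by (simp add: powr_realpow[symmetric] powr_powr mult.commute)
  finally show ?thesis .
qed

lemma r0: "0 \<le> 2 powr (\<gamma> * real CARD('a) - 1)" "2 powr (\<gamma> * real CARD('a) - 1) < 1"
proof -
  show "0 \<le> 2 powr (\<gamma> * real CARD('a) - 1)" by simp
  have "2 powr (\<gamma> * real CARD('a) - 1) < 2 powr 0" by (rule powr_less_mono) (use gam in auto)
  then show "2 powr (\<gamma> * real CARD('a) - 1) < 1" by simp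
qed

lemma lim_cc: "(\<lambda>n. cc n / 2 ^ n) \<longlonglongrightarrow> 0"
  unfolding cc_ratio by (rule LIMSEQ_power_zero) (use r0 in auto)

lemma lim_ncc: "(\<lambda>n. real n * (cc n / 2 ^ n)) \<longlonglongrightarrow> 0"
  unfolding cc_ratio by (rule n_pow_lim[OF r0])

lemma lim_inv2: "(\<lambda>n. 1 / (2::real) ^ n) \<longlonglongrightarrow> 0"
  using LIMSEQ_power_zero[of "1/2::real"] by (simp add: power_one_over)

lemma lim_ninv2: "(\<lambda>n. real n * (1 / (2::real) ^ n)) \<longlonglongrightarrow> 0"
  using n_pow_lim[of "1/2"] by (simp add: power_one_over)

lemma epsG_lim: "(\<lambda>n. 2 * XX n / 2 ^ n + 2 * AA * n * \<rho> ^ n) \<longlonglongrightarrow> 0"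
proof -
  have e: "2 * XX n / 2 ^ n + 2 * AA * n * \<rho> ^ n
      = 4 * BK * DD * (cc n / 2 ^ n) + 4 * DD\<^sup>2 * (1 / 2 ^ n) + 2 * AA * (real n * \<rho> ^ n)" for n
    unfolding XX_def by (simp add: field_simps)
  have "(\<lambda>n. 4 * BK * DD * (cc n / 2 ^ n) + 4 * DD\<^sup>2 * (1 / 2 ^ n) + 2 * AA * (real n * \<rho> ^ n)) \<longlonglongrightarrow>
      4 * BK * DD * 0 + 4 * DD\<^sup>2 * 0 + 2 * AA * 0"
    by (intro tendsto_intros lim_cc lim_inv2 n_pow_lim) (use rho in auto)
  then show ?thesis unfolding e by simp
qed

lemma epsT_lim: "(\<lambda>n. 4 * ((cc n * BK + DD) / 2 ^ n)\<^sup>2 + 8 * real n * XX n / 2 ^ n + 8 * AA * (real n)\<^sup>2 * \<rho> ^ n) \<longlonglongrightarrow> 0"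
proof -
  have e: "4 * ((cc n * BK + DD) / 2 ^ n)\<^sup>2 + 8 * real n * XX n / 2 ^ n + 8 * AA * (real n)\<^sup>2 * \<rho> ^ n
      = 4 * (BK * (cc n / 2 ^ n) + DD * (1 / 2 ^ n))\<^sup>2 + (16 * BK * DD * (real n * (cc n / 2 ^ n)) + 16 * DD\<^sup>2 * (real n * (1 / 2 ^ n)))
        + 8 * AA * ((real n)\<^sup>2 * \<rho> ^ n)" for n
    unfolding XX_def by (simp add: field_simps)
  have "(\<lambda>n. 4 * (BK * (cc n / 2 ^ n) + DD * (1 / 2 ^ n))\<^sup>2 + (16 * BK * DD * (real n * (cc n / 2 ^ n)) + 16 * DD\<^sup>2 * (real n * (1 / 2 ^ n)))
        + 8 * AA * ((real n)\<^sup>2 * \<rho> ^ n)) \<longlonglongrightarrow>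
      4 * (BK * 0 + DD * 0)\<^sup>2 + (16 * BK * DD * 0 + 16 * DD\<^sup>2 * 0) + 8 * AA * 0"
    by (intro tendsto_intros lim_cc lim_inv2 lim_ncc lim_ninv2 n2_pow_lim) (use rho in auto)
  then show ?thesis unfolding e by simp
qed

end


context bmcset begin

lemma prob_lim:
  fixes Z :: "nat \<Rightarrow> _ \<Rightarrow> real"
  assumes Zm: "\<And>n. Z n \<in> borel_measurable M" and Zb: "\<And>n. bdd (Z n)"
    and Ebd: "eventually (\<lambda>n. (\<integral>\<omega>. (Z n \<omega>)\<^sup>2 \<partial>M) \<le> e n) sequentially"
    and e0: "e \<longlonglongrightarrow> 0" and b0: "b \<longlonglongrightarrow> 0" and eps: "0 < \<epsilon>"
  shows "(\<lambda>n. measure M {\<omega> \<in> space M. \<epsilon> < \<bar>Z n \<omega> + b n\<bar>}) \<longlonglongrightarrow> 0"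
proof (rule tendsto_sandwich[where f="\<lambda>_. 0" and h="\<lambda>n. e n / (\<epsilon>/2)\<^sup>2"])
  interpret prob_space M by (rule M_prob)
  show "eventually (\<lambda>n. 0 \<le> measure M {\<omega> \<in> space M. \<epsilon> < \<bar>Z n \<omega> + b n\<bar>}) sequentially" by simp
  have "\<forall>e>0. eventually (\<lambda>n. dist (b n) 0 < e) sequentially" using b0 tendsto_iff by blast
  moreover have "0 < \<epsilon>/2" using eps by simp
  ultimately have bs: "eventually (\<lambda>n. dist (b n) 0 < \<epsilon>/2) sequentially" by blast
  show "eventually (\<lambda>n. measure M {\<omega> \<in> space M. \<epsilon> < \<bar>Z n \<omega> + b n\<bar>} \<le> e n / (\<epsilon>/2)\<^sup>2) sequentially"
    using bs Ebd
  proof eventually_elim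
    case (elim n)
    have [measurable]: "Z n \<in> borel_measurable M" by (rule Zm)
    have "measure M {\<omega> \<in> space M. \<epsilon> < \<bar>Z n \<omega> + b n\<bar>} \<le> measure M {\<omega> \<in> space M. \<bar>Z n \<omega>\<bar> \<ge> \<epsilon>/2}"
    proof (rule finite_measure_mono)
      have "\<bar>b n\<bar> < \<epsilon>/2" using elim(1) by (simp add: dist_real_def)
      then show "{\<omega> \<in> space M. \<epsilon> < \<bar>Z n \<omega> + b n\<bar>} \<subseteq> {\<omega> \<in> space M. \<bar>Z n \<omega>\<bar> \<ge> \<epsilon>/2}" by auto
    qed simp
    also have "\<dots> \<le> (\<integral>\<omega>. (Z n \<omega>)^2 \<partial>M) / (\<epsilon>/2)\<^sup>2"
      by (rule second_moment_method) (use eps in \<open>auto intro!: intM bdd_power Zb\<close>)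
    also have "\<dots> \<le> e n / (\<epsilon>/2)\<^sup>2" by (rule divide_right_mono[OF elim(2)]) simp
    finally show ?case .
  qed
  show "(\<lambda>n. e n / (\<epsilon>/2)\<^sup>2) \<longlonglongrightarrow> 0" using tendsto_divide_zero[OF e0] by simp
qed simp

end

context est begin

lemma avg_decomp:
  assumes "finite A" "A \<noteq> {}"
  shows "(1 / real (card A)) * (\<Sum>u\<in>A. FF n (X u \<omega>)) - mu x0 = (\<Sum>u\<in>A. ph n (X u \<omega>)) / real (card A) + (mm n - mu x0)"
proof -
  have c: "real (card A) > 0" using assms by (simp add: card_gt_0_iff)
  have "(\<Sum>u\<in>A. FF n (X u \<omega>)) = (\<Sum>u\<in>A. ph n (X u \<omega>)) + real (card A) * mm n"
    unfolding ph_def by (simp add: sum_subtractf)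
  then show ?thesis using c by (simp add: field_simps)
qed

lemma est_main:
  assumes eps: "0 < \<epsilon>" and A: "A \<in> {Gen, Tree}"
  shows "(\<lambda>n. measure M {\<omega> \<in> space M. \<bar>(1 / real (card (A n))) * (\<Sum>u\<in>A n. FF n (X u \<omega>)) - mu x0\<bar> > \<epsilon>}) \<longlonglongrightarrow> 0"
proof -
  have b0: "(\<lambda>n. mm n - mu x0) \<longlonglongrightarrow> 0" using mm_lim by (simp add: LIM_zero)
  from A show ?thesis
  proof
    assume AG: "A = Gen"
    have eq: "(1 / real (card (A n))) * (\<Sum>u\<in>A n. FF n (X u \<omega>)) - mu x0 = Sk n n \<omega> / 2 ^ n + (mm n - mu x0)" for n \<omega>
    proof -
      have ne: "Gen n \<noteq> {}" using Gen_card[of n] by (metis card.empty power_not_zero zero_neq_numeral)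
      show ?thesis unfolding AG using avg_decomp[OF Gen_finite ne, of n \<omega>] by (simp add: Sk_def Gen_card)
    qed
    have "(\<lambda>n. measure M {\<omega> \<in> space M. \<epsilon> < \<bar>Sk n n \<omega> / 2 ^ n + (mm n - mu x0)\<bar>}) \<longlonglongrightarrow> 0"
    proof (rule prob_lim[OF _ _ _ epsG_lim b0 eps])
      show "(\<lambda>\<omega>. Sk n n \<omega> / 2 ^ n) \<in> borel_measurable M" for n by simp
      show "bdd (\<lambda>\<omega>. Sk n n \<omega> / 2 ^ n)" for n by (rule bdd_divide[OF Sk_bdd])
      show "eventually (\<lambda>n. (\<integral>\<omega>. (Sk n n \<omega> / 2 ^ n)\<^sup>2 \<partial>M) \<le> 2 * XX n / 2 ^ n + 2 * AA * real n * \<rho> ^ n) sequentially"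
        using eventually_ge_at_top[of 1] by eventually_elim (rule EG_bd)
    qed
    then show ?thesis unfolding eq by simp
  next
    assume "A \<in> {Tree}"
    then have AT: "A = Tree" by simp
    have eq: "(1 / real (card (A n))) * (\<Sum>u\<in>A n. FF n (X u \<omega>)) - mu x0 = ST n \<omega> / (2 ^ (n + 1) - 1) + (mm n - mu x0)" for n \<omega>
    proof -
      have fin: "finite (Tree n)" unfolding Tree_Gen by simp
      have ne: "Tree n \<noteq> {}" by (auto simp: Tree_def intro: exI[of _ "[]"])
      have cT: "real (card (Tree n)) = 2 ^ (n + 1) - 1"
      proof -
        have "(1::nat) \<le> 2 ^ Suc n" by simp
        then show ?thesis unfolding Tree_card by (simp add: of_nat_diff)
      qed
      have "(\<Sum>u\<in>Tree n. ph n (X u \<omega>)) = ST n \<omega>" unfolding ST_def Sk_def by (rule sum_Tree)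
      then show ?thesis unfolding AT using avg_decomp[OF fin ne, of n \<omega>] cT by simp
    qed
    have "(\<lambda>n. measure M {\<omega> \<in> space M. \<epsilon> < \<bar>ST n \<omega> / (2 ^ (n + 1) - 1) + (mm n - mu x0)\<bar>}) \<longlonglongrightarrow> 0"
    proof (rule prob_lim[OF _ _ _ epsT_lim b0 eps])
      show "(\<lambda>\<omega>. ST n \<omega> / (2 ^ (n + 1) - 1)) \<in> borel_measurable M" for n unfolding ST_def by simp
      show "bdd (\<lambda>\<omega>. ST n \<omega> / (2 ^ (n + 1) - 1))" for n
        unfolding ST_def by (intro bdd_divide bdd_sum Sk_bdd)
      show "eventually (\<lambda>n. (\<integral>\<omega>. (ST n \<omega> / (2 ^ (n + 1) - 1))\<^sup>2 \<partial>M) \<le> 4 * ((cc n * BK + DD) / 2 ^ n)\<^sup>2 + 8 * real n * XX n / 2 ^ n + 8 * AA * (real n)\<^sup>2 * \<rho> ^ n) sequentially"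
        by (intro always_eventually allI ET_bd)
    qed
    then show ?thesis unfolding eq by simp
  qed
qed

end


theorem lemma3p5:
  fixes M :: "'a measure"
    and X :: "bool list \<Rightarrow> 'a \<Rightarrow> real ^ 'd::finite"
    and \<nu> :: "(real ^ 'd) measure"
    and P :: "real ^ 'd \<Rightarrow> ((real ^ 'd) \<times> (real ^ 'd)) measure"
    and mu :: "real ^ 'd \<Rightarrow> real"
    and p :: "real ^ 'd \<Rightarrow> real ^ 'd \<Rightarrow> real ^ 'd \<Rightarrow> real"
    and K :: "real ^ 'd \<Rightarrow> real"
    and \<alpha> Mc \<gamma> s L :: real
    and k1 :: nat
  defines "\<mu>M \<equiv> density lborel (\<lambda>x. ennreal (mu x))"
  defines "q \<equiv> (\<lambda>x y. (\<integral>\<^sup>+ z. ennreal (p x y z + p x z y) \<partial>\<mu>M) / 2)"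
  defines "hsq \<equiv> (\<lambda>x. \<integral>\<^sup>+ y. (q x y) ^ 2 \<partial>\<mu>M)"
  defines "hfrak \<equiv> (\<lambda>x. sqrt (enn2real (hsq x)))"
  defines "h \<equiv> (\<lambda>n::nat. 2 powr (- real n * \<gamma>))"
  defines "d \<equiv> CARD('d)"
  assumes bmc: "bmc M X \<nu> P"
  \<comment> \<open>(A3) first part: mu is a Lebesgue density (of the measure muM)\<close>
    and mu_meas: "mu \<in> borel_measurable borel"
    and mu_nonneg: "\<And>x. mu x \<ge> 0"
  \<comment> \<open>(A1) geometric ergodicity\<close>
    and A1_inv: "Q_invariant_prob P \<mu>M"
    and A1_unique: "\<And>m. Q_invariant_prob P m \<Longrightarrow> m = \<mu>M"
    and A1_alpha: "0 < \<alpha>" "\<alpha> < 1"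
    and A1_geom: "\<And>f n. f \<in> borel_measurable borel \<Longrightarrow> (\<integral>\<^sup>+ x. ennreal ((f x)\<^sup>2) \<partial>\<mu>M) < \<infinity> \<Longrightarrow>
        (\<integral>\<^sup>+ x. ennreal ((Qpow P n f x - (\<integral> y. f y \<partial>\<mu>M))\<^sup>2) \<partial>\<mu>M)
          \<le> ennreal ((Mc * \<alpha> ^ n)\<^sup>2) * (\<integral>\<^sup>+ x. ennreal ((f x)\<^sup>2) \<partial>\<mu>M)"
  \<comment> \<open>(A2) regularity of P and nu\<close>
    and p_meas: "(\<lambda>(x, y, z). p x y z) \<in> borel_measurable borel"
    and p_nonneg: "\<And>x y z. p x y z \<ge> 0"
    and A2_i: "\<And>x. P x = density (\<mu>M \<Otimes>\<^sub>M \<mu>M) (\<lambda>(y, z). ennreal (p x y z))"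
    and A2_ii: "(\<integral>\<^sup>+ x. hsq x \<partial>\<mu>M) < \<infinity>"
    and A2_iii: "k1 \<ge> 1"
       "(\<integral>\<^sup>+ x. (\<integral>\<^sup>+ y. ennreal (hfrak y) \<partial>(Qn P (k1 - 1) x)) ^ 6 \<partial>\<mu>M) < \<infinity>"
    and A2_iv: "\<exists>(k0::nat) (\<nu>0 :: real ^ 'd \<Rightarrow> real) B.
        \<nu>0 \<in> borel_measurable borel \<and> (AE y in \<mu>M. \<bar>\<nu>0 y\<bar> \<le> B) \<and>
        mQn \<nu> P k0 = density \<mu>M (\<lambda>y. ennreal (\<nu>0 y))"
  \<comment> \<open>(A3) finiteness of C0, C1, C2\<close>
    and A3_C0: "\<exists>C::real. \<forall>x y. ennreal (mu x) + q x y * ennreal (mu y) \<le> ennreal C"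
    and A3_C1: "\<exists>C::real. \<forall>y z. (\<integral>\<^sup>+ x. ennreal (mu x * mu y * mu z * p x y z) \<partial>lborel) \<le> ennreal C"
    and A3_C2: "(\<integral>\<^sup>+ x. ennreal (mu x) *
        (SUP z. (\<integral>\<^sup>+ y. ennreal (mu y * hfrak y * mu z * (p x y z + p x z y)) \<partial>lborel)) ^ 2 \<partial>lborel) < \<infinity>"
  \<comment> \<open>(A4) kernel and bandwidths\<close>
    and K_meas: "K \<in> borel_measurable borel"
    and K_bounded: "\<exists>B. \<forall>x. \<bar>K x\<bar> \<le> B"
    and K_int: "integrable lborel K"
    and K_sq_int: "integrable lborel (\<lambda>x. (K x)\<^sup>2)"
    and K_one: "(\<integral> x. K x \<partial>lborel) = 1"
    and K_tail: "((\<lambda>x. norm x * K x) \<longlongrightarrow> 0) at_infinity"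
    and gamma: "0 < \<gamma>" "\<gamma> < 1 / real d"
  \<comment> \<open>(A5) smoothness\<close>
    and s_pos: "s > 0"
    and A5_i_diff: "\<And>j m x. m < nat \<lfloor>s\<rfloor> \<Longrightarrow>
        (\<lambda>t. pdiff j m mu (upd x j t)) differentiable (at (x $ j))"
    and A5_i_L: "0 < L"
    and A5_i_hoelder: "\<And>x t j. \<bar>pdiff j (nat \<lfloor>s\<rfloor>) mu (upd x j t) - pdiff j (nat \<lfloor>s\<rfloor>) mu x\<bar>
        \<le> L * \<bar>x $ j - t\<bar> powr (s - real_of_int \<lfloor>s\<rfloor>)"
    and A5_ii_moment: "integrable lborel (\<lambda>x. norm x powr s * K x)"
    and A5_ii_vanish: "\<And>x j k. k \<in> {1..nat \<lfloor>s\<rfloor>} \<Longrightarrow>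
        integrable lborel (\<lambda>t::real. t ^ k * K (upd x j t)) \<and>
        (\<integral> t. t ^ k * K (upd x j t) \<partial>lborel) = 0"
    and A5_iii: "\<gamma> > 1 / (2 * s + real d)"
  \<comment> \<open>additional condition when alpha > 1/sqrt 2\<close>
    and alpha_cond: "\<alpha> > 1 / sqrt 2 \<Longrightarrow> 2 powr (real d * \<gamma>) > 2 * \<alpha>\<^sup>2"
  shows "\<forall>x. isCont mu x \<longrightarrow> (\<forall>A \<in> {Gen, Tree}. \<forall>\<epsilon>>0.
           (\<lambda>n. measure M {\<omega> \<in> space M. \<bar>mu_hat K h X (A n) n x \<omega> - mu x\<bar> > \<epsilon>})
              \<longlonglongrightarrow> 0)"
proof (intro allI impI ballI)
  fix x :: "real^'d" and A :: "nat \<Rightarrow> bool list set" and \<epsilon> :: real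
  assume cont: "isCont mu x" and A: "A \<in> {Gen, Tree}" and eps: "\<epsilon> > 0"
  obtain k0 \<nu>0 B\<nu> where nu0m: "\<nu>0 \<in> borel_measurable borel" and nu0b: "AE y in \<mu>M. \<bar>\<nu>0 y\<bar> \<le> B\<nu>"
    and nu0d: "mQn \<nu> P k0 = density \<mu>M (\<lambda>y. ennreal (\<nu>0 y))"
    using A2_iv by blast
  obtain BK where BK: "\<And>x. \<bar>K x\<bar> \<le> BK" using K_bounded by blast
  obtain C where C: "\<And>x y. ennreal (mu x) + q x y * ennreal (mu y) \<le> ennreal C" using A3_C0 by blast
  have bmcd: "prob_space M" "P \<in> borel \<rightarrow>\<^sub>M prob_algebra (borel \<Otimes>\<^sub>M borel)" "distr M borel (X []) = \<nu>"
    "\<And>u. X u \<in> M \<rightarrow>\<^sub>M borel"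
    using bmc unfolding bmc_def by auto
  have mu_prob: "prob_space \<mu>M" using A1_inv unfolding Q_invariant_prob_def by blast
  have nu_prob: "prob_space \<nu>"
    unfolding bmcd(3)[symmetric] by (rule prob_space.prob_space_distr[OF bmcd(1) bmcd(4)])
  have nu_sets: "sets \<nu> = sets borel" unfolding bmcd(3)[symmetric] by simp
  have ks: "kset P mu p"
    by (rule kset.intro) (use bmcd(2) mu_meas mu_nonneg mu_prob p_meas p_nonneg A2_i in \<open>simp_all add: \<mu>M_def\<close>)
  interpret kset P mu p by (rule ks)
  have qq_eq: "qq z y = q z y" for z y unfolding qq_def q2_def q_def \<mu>M_def ..
  have dpos: "0 < real d" unfolding d_def by simp
  interpret est P mu p \<nu> k0 \<nu>0 B\<nu> M X K BK "max 0 C" Mc \<alpha> \<gamma> x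
  proof (intro est.intro bmcset.intro kset3.intro kset2.intro est_axioms.intro bmcset_axioms.intro kset3_axioms.intro kset2_axioms.intro ks)
    show "Q_invariant_prob P (density lborel (\<lambda>x. ennreal (mu x)))" using A1_inv unfolding \<mu>M_def .
    show "prob_space \<nu>" by (rule nu_prob)
    show "sets \<nu> = sets borel" by (rule nu_sets)
    show "\<nu>0 \<in> borel_measurable borel" by (rule nu0m)
    show "AE y in density lborel (\<lambda>x. ennreal (mu x)). \<bar>\<nu>0 y\<bar> \<le> B\<nu>" using nu0b unfolding \<mu>M_def .
    show "mQn \<nu> P k0 = density (density lborel (\<lambda>x. ennreal (mu x))) (\<lambda>y. ennreal (\<nu>0 y))" using nu0d unfolding \<mu>M_def .
    show "bmc M X \<nu> P" by (rule bmc)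
    show "K \<in> borel_measurable borel" by (rule K_meas)
    show "\<bar>K y\<bar> \<le> BK" for y by (rule BK)
    show "integrable lborel K" by (rule K_int)
    show "(\<integral>y. K y \<partial>lborel) = 1" by (rule K_one)
    show "qq z y * ennreal (mu y) \<le> ennreal (max 0 C)" for z y
    proof -
      have "qq z y * ennreal (mu y) \<le> ennreal (mu z) + q z y * ennreal (mu y)" unfolding qq_eq by simp
      also have "\<dots> \<le> ennreal C" by (rule C)
      finally show ?thesis by (simp add: ennreal_max_0)
    qed
    show "0 \<le> max 0 C" by simp
    show "mu y \<le> max 0 C" for y
    proof -
      have "ennreal (mu y) \<le> ennreal (mu y) + q y y * ennreal (mu y)" by simp
      also have "\<dots> \<le> ennreal C" by (rule C)
      also have "\<dots> = ennreal (max 0 C)" by (simp add: ennreal_max_0)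
      finally show ?thesis by (subst (asm) ennreal_le_iff) auto
    qed
    show "isCont mu x" by (rule cont)
    show "\<And>f n. f \<in> borel_measurable borel \<Longrightarrow> (\<integral>\<^sup>+ x. ennreal ((f x)\<^sup>2) \<partial>density lborel (\<lambda>x. ennreal (mu x))) < \<infinity> \<Longrightarrow>
        (\<integral>\<^sup>+ x. ennreal ((Qpow P n f x - (\<integral> y. f y \<partial>density lborel (\<lambda>x. ennreal (mu x))))\<^sup>2) \<partial>density lborel (\<lambda>x. ennreal (mu x)))
          \<le> ennreal ((Mc * \<alpha> ^ n)\<^sup>2) * (\<integral>\<^sup>+ x. ennreal ((f x)\<^sup>2) \<partial>density lborel (\<lambda>x. ennreal (mu x)))"
      using A1_geom unfolding \<mu>M_def .
    show "0 < \<alpha>" "\<alpha> < 1" by (rule A1_alpha(1), rule A1_alpha(2))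
    show "0 < \<gamma>" by (rule gamma(1))
    show "\<gamma> * real CARD('d) < 1" using gamma(2) dpos unfolding d_def by (simp add: field_simps)
  qed
  have mh: "mu_hat K h X (A n) n x \<omega> = (1 / real (card (A n))) * (\<Sum>u\<in>A n. FF n (X u \<omega>))" for n \<omega>
  proof -
    have "h n = hh n" unfolding h_def hh_def ..
    then show ?thesis unfolding mu_hat_def Kh_def FF_def cc_def
      by (simp add: sum_distrib_left mult.assoc)
  qed
  show "(\<lambda>n. measure M {\<omega> \<in> space M. \<bar>mu_hat K h X (A n) n x \<omega> - mu x\<bar> > \<epsilon>}) \<longlonglongrightarrow> 0"
    unfolding mh using est_main[OF eps A] .
qed

end
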